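(* Let $m\ge1$, $\mathbf x=(x_1,\dots,x_{m+1})$, $\mathbf y=(y_1,\dots,y_{m+1})$. The partition function $Z_{\mathrm{HT}}(2m+1;\mathbf x,\mathbf y)$ is symmetric in $x_1,\dots,x_m$ and (separately) symmetric in $y_1,\dots,y_m$. Moreover, if $y_1=ax_1$, then \[ Z_{\mathrm{HT}}(2m+1;\mathbf x,\mathbf y)=\sigma^2(a^2)\,\sigma(a\bar x_1y_{m+1})\,\sigma(a\bar x_{m+1}y_1)\prod_{i=2}^m\big[\sigma^2(a\bar x_1y_i)\,\sigma^2(a\bar x_iy_1)\big]\,Z_{\mathrm{HT}}\big(2m-1;(x_2,\dots,x_{m+1}),(y_2,\dots,y_{m+1})\big). \]
   Context: Notation: $\bar z=z^{-1}$, $\sigma(z)=z-z^{-1}$; $a$ is a fixed nonzero parameter. Vertex weights: at a vertex where a horizontal and a vertical line cross, the four incident edges are oriented with exactly two pointing in. Type 1: horizontal edges in, vertical out; type 2: horizontal out, vertical in; type 3: horizontal right, vertical up; type 4: horizontal left, vertical down; type 5: horizontal left, vertical up; type 6: horizontal right, vertical down. A vertex with spectral parameter $z$ has weight $\sigma(a^2)$ (types 1,2), $\sigma(az)$ (types 3,4), $\sigma(a\bar z)$ (types 5,6). A state is an orientation of internal edges satisfying the two-in rule at every vertex; the partition function is the sum over states of the product of vertex weights. Odd half-turn model $Z_{\mathrm{HT}}(2m+1;\mathbf x,\mathbf y)$ (for $\mathbf x,\mathbf y$ of length $m+1$, $m\ge0$): vertices $(r,j)$ with $1\le r\le 2m+1$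 (from the top), $1\le j\le m$ (from the left), and $(r,m+1)$ with $m+2\le r\le 2m+1$; vertex $(r,j)$ has parameter $x_{\min(r,2m+2-r)}\bar y_j$. Edges join consecutive vertices in rows and columns. Left boundary edges point right (into the grid), top boundary edges of columns $1,\dots,m$ point up, bottom boundary edges of columns $1,\dots,m+1$ point down. The edge to the right of $(m+1,m)$ and the edge above $(m+2,m+1)$ form a single edge, pointing right out of $(m+1,m)$ iff pointing down into $(m+2,m+1)$. For each $r\le m$ the edges to the right of $(r,m)$ and of $(2m+2-r,m+1)$ form a single edge with one orientation (out of one vertex, into the other). For $m=0$ there are no vertices and $Z_{\mathrm{HT}}(1)=1$. *)

theory Defs
  imports Complex_Main "HOL-Combinatorics.Permutations"
begin

definition sig :: "complex \<Rightarrow> complex" where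
  "sig z = z - inverse z"

text \<open>Vertices of the odd half-turn grid of size 2m+1: pairs (row, column),
  rows counted from the top, columns from the left.\<close>
definition ht_verts :: "nat \<Rightarrow> (nat \<times> nat) set" where
  "ht_verts m = {(r,j). 1 \<le> r \<and> r \<le> 2*m+1 \<and> 1 \<le> j \<and> j \<le> m}
              \<union> {(r,j). m+2 \<le> r \<and> r \<le> 2*m+1 \<and> j = m+1}"

text \<open>H: (r,j) \<in> H iff the edge immediately to the right of vertex (r,j) (j \<le> m) points right.
  U: (r,j) \<in> U iff the edge immediately above vertex (r,j) points up
     (only for edges not fixed by the boundary or identified with a horizontal edge).\<close>
definition ht_Hdom :: "nat \<Rightarrow> (nat \<times> nat) set" where
  "ht_Hdom m = {(r,j). 1 \<le> r \<and> r \<le> 2*m+1 \<and> 1 \<le> j \<and> j \<le> m}"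

definition ht_Udom :: "nat \<Rightarrow> (nat \<times> nat) set" where
  "ht_Udom m = {(r,j). 2 \<le> r \<and> r \<le> 2*m+1 \<and> 1 \<le> j \<and> j \<le> m}
             \<union> {(r,j). m+3 \<le> r \<and> r \<le> 2*m+1 \<and> j = m+1}"

definition ht_states :: "nat \<Rightarrow> ((nat \<times> nat) set \<times> (nat \<times> nat) set) set" where
  "ht_states m = Pow (ht_Hdom m) \<times> Pow (ht_Udom m)"

definition left_right :: "(nat \<times> nat) set \<Rightarrow> nat \<Rightarrow> nat \<Rightarrow> bool" where
  "left_right H r j = (if j = 1 then True else (r, j-1) \<in> H)"

definition right_right :: "nat \<Rightarrow> (nat \<times> nat) set \<Rightarrow> nat \<Rightarrow> nat \<Rightarrow> bool" where
  \<comment> \<open>right edge points right; the right edge of (r,m+1) is identified with the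
      right edge of (2m+2-r,m), with opposite direction (out of one vertex, into the other)\<close>
  "right_right m H r j = (if j \<le> m then (r,j) \<in> H else (2*m+2-r, m) \<notin> H)"

definition top_up :: "nat \<Rightarrow> (nat \<times> nat) set \<Rightarrow> (nat \<times> nat) set \<Rightarrow> nat \<Rightarrow> nat \<Rightarrow> bool" where
  \<comment> \<open>top edge points up; the top edge of (m+2,m+1) points down iff the right edge
      of (m+1,m) points right\<close>
  "top_up m H U r j = (if r = 1 then True
                       else if r = m+2 \<and> j = m+1 then (m+1, m) \<notin> H
                       else (r,j) \<in> U)"

definition bot_up :: "nat \<Rightarrow> (nat \<times> nat) set \<Rightarrow> nat \<Rightarrow> nat \<Rightarrow> bool" where
  "bot_up m U r j = (if r = 2*m+1 then False else (r+1, j) \<in> U)"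

text \<open>Two-in (ice) rule at a vertex, in terms of l = left edge points right,
  rt = right edge points right, t = top edge points up, b = bottom edge points up.\<close>
definition ice :: "bool \<Rightarrow> bool \<Rightarrow> bool \<Rightarrow> bool \<Rightarrow> bool" where
  "ice l rt t b = (of_bool l + of_bool (\<not> rt) + of_bool (\<not> t) + of_bool b = (2::nat))"

definition vweight :: "complex \<Rightarrow> complex \<Rightarrow> bool \<Rightarrow> bool \<Rightarrow> bool \<Rightarrow> bool \<Rightarrow> complex" where
  "vweight a z l rt t b =
     (if l \<and> \<not> rt \<and> t \<and> \<not> b then sig (a^2)            \<comment> \<open>type 1\<close>
      else if \<not> l \<and> rt \<and> \<not> t \<and> b then sig (a^2)       \<comment> \<open>type 2\<close>
      else if l \<and> rt \<and> t \<and> b then sig (a * z)           \<comment> \<open>type 3\<close>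
      else if \<not> l \<and> \<not> rt \<and> \<not> t \<and> \<not> b then sig (a * z) \<comment> \<open>type 4\<close>
      else if \<not> l \<and> \<not> rt \<and> t \<and> b then sig (a * inverse z) \<comment> \<open>type 5\<close>
      else if l \<and> rt \<and> \<not> t \<and> \<not> b then sig (a * inverse z) \<comment> \<open>type 6\<close>
      else 0)"

definition spec :: "nat \<Rightarrow> (nat \<Rightarrow> complex) \<Rightarrow> (nat \<Rightarrow> complex) \<Rightarrow> nat \<Rightarrow> nat \<Rightarrow> complex" where
  "spec m x y r j = x (min r (2*m+2-r)) * inverse (y j)"

definition ht_valid :: "nat \<Rightarrow> (nat \<times> nat) set \<times> (nat \<times> nat) set \<Rightarrow> bool" where
  "ht_valid m s = (\<forall>(r,j)\<in>ht_verts m.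
      ice (left_right (fst s) r j) (right_right m (fst s) r j)
          (top_up m (fst s) (snd s) r j) (bot_up m (snd s) r j))"

text \<open>Z_HT(2m+1; x, y), with x, y indexed by 1..m+1.\<close>
definition Z_HT :: "nat \<Rightarrow> complex \<Rightarrow> (nat \<Rightarrow> complex) \<Rightarrow> (nat \<Rightarrow> complex) \<Rightarrow> complex" where
  "Z_HT m a x y = (\<Sum>s\<in>{s\<in>ht_states m. ht_valid m s}.
      \<Prod>(r,j)\<in>ht_verts m.
        vweight a (spec m x y r j) (left_right (fst s) r j) (right_right m (fst s) r j)
          (top_up m (fst s) (snd s) r j) (bot_up m (snd s) r j))"

end

theory Submission
  imports Defs
begin

definition Rw :: "complex \<Rightarrow> complex \<Rightarrow> bool \<Rightarrow> bool \<Rightarrow> bool \<Rightarrow> bool \<Rightarrow> complex" where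
 "Rw a q l1 l2 u1 u2 = (if l1 = u1 \<and> l2 = u2 then (if l1 = l2 then sig (a^2 * inverse q) else sig (a^2))
    else if l1 = u2 \<and> l2 = u1 then sig q else 0)"

lemma sum_bool: "(\<Sum>v\<in>(UNIV::bool set). f v) = f False + f True"
  by (simp add: UNIV_bool add.commute)

lemma ybeH:
  assumes "a \<noteq> 0" "z1 \<noteq> 0" "z2 \<noteq> 0"
  shows "(\<Sum>u1\<in>UNIV. \<Sum>u2\<in>UNIV. \<Sum>v1\<in>UNIV. Rw a (z1/z2) l1 l2 u1 u2 * vweight a z1 u1 r1 t v1 * vweight a z2 u2 r2 v1 v2)
       = (\<Sum>w1\<in>UNIV. \<Sum>w2\<in>UNIV. \<Sum>v1\<in>UNIV. vweight a z2 l1 w1 t v1 * vweight a z1 l2 w2 v1 v2 * Rw a (z1/z2) w1 w2 r1 r2)"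
  using assms
  apply (simp add: sum_bool)
  apply (cases l1; cases l2; cases r1; cases r2; cases t; cases v2)
  apply (simp_all add: Rw_def vweight_def sig_def field_simps)
  apply (algebra)+
  done

lemma ybeV:
  assumes "a \<noteq> 0" "z1 \<noteq> 0" "z2 \<noteq> 0"
  shows "(\<Sum>s1\<in>UNIV. \<Sum>s2\<in>UNIV. \<Sum>m\<in>UNIV. Rw a (z1/z2) t1 t2 s1 s2 * vweight a z1 l m s1 v1 * vweight a z2 m r s2 v2)
       = (\<Sum>m\<in>UNIV. \<Sum>u1\<in>UNIV. \<Sum>u2\<in>UNIV. vweight a z2 l m t1 u1 * vweight a z1 m r t2 u2 * Rw a (z1/z2) u1 u2 v1 v2)"
  using assms
  apply (simp add: sum_bool)
  apply (cases l; cases r; cases t1; cases t2; cases v1; cases v2)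
  apply (simp_all add: Rw_def vweight_def sig_def field_simps)
  apply (algebra)+
  done

lemma Rw_halfturn: "Rw a q l1 l2 u1 u2 = Rw a q (\<not>u2) (\<not>u1) (\<not>l2) (\<not>l1)"
  by (auto simp: Rw_def)

lemma vweight_ice: "\<not> ice l rt t b \<Longrightarrow> vweight a z l rt t b = 0"
  by (auto simp: ice_def vweight_def)

definition blists :: "nat \<Rightarrow> bool list set" where
  "blists n = {xs. length xs = n}"

lemma finite_blists[simp]: "finite (blists n)"
proof -
  have "blists n = {xs. set xs \<subseteq> UNIV \<and> length xs = n}" by (auto simp: blists_def)
  then show ?thesis using finite_lists_length_eq[of "UNIV::bool set" n] by simp
qed

lemma blists_0[simp]: "blists 0 = {[]}" by (auto simp: blists_def)

lemma sum_blists_Suc: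
  "(\<Sum>h\<in>blists (Suc n). f h) = (\<Sum>b\<in>UNIV. \<Sum>h\<in>blists n. f (b#h))"
proof -
  have e: "blists (Suc n) = (\<lambda>(b,h). b#h) ` (UNIV \<times> blists n)"
    by (auto simp: blists_def length_Suc_conv image_iff)
  have i: "inj_on (\<lambda>(b,h). b#h) (UNIV \<times> blists n)" by (auto simp: inj_on_def)
  have "(\<Sum>h\<in>blists (Suc n). f h) = (\<Sum>p\<in>UNIV \<times> blists n. f (fst p # snd p))"
    unfolding e by (subst sum.reindex[OF i]) (auto intro!: sum.cong)
  also have "\<dots> = (\<Sum>b\<in>UNIV. \<Sum>h\<in>blists n. f (b#h))"
    by (simp add: sum.cartesian_product split_def)
  finally show ?thesis .
qed

fun col :: "complex \<Rightarrow> complex list \<Rightarrow> bool \<Rightarrow> bool \<Rightarrow> bool list \<Rightarrow> bool list \<Rightarrow> complex" where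
  "col a [] t b [] [] = (if t = b then 1 else 0)"
| "col a (z#zs) t b (l#L) (r#R) = (\<Sum>v\<in>UNIV. vweight a z l r t v * col a zs v b L R)"
| "col a _ t b _ _ = 0"

fun cols :: "complex \<Rightarrow> complex list list \<Rightarrow> (bool list \<Rightarrow> complex) \<Rightarrow> bool list \<Rightarrow> complex" where
  "cols a [] w h = w h"
| "cols a (zs#zss) w h = (\<Sum>h'\<in>blists (length h). col a zs True False h h' * cols a zss w h')"

lemma col_len: "length L \<noteq> length zs \<or> length R \<noteq> length zs \<Longrightarrow> col a zs t b L R = 0"
  by (induction a zs t b L R rule: col.induct) auto

definition Rop :: "complex \<Rightarrow> nat \<Rightarrow> complex \<Rightarrow> (bool list \<Rightarrow> complex) \<Rightarrow> bool list \<Rightarrow> complex" where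
 "Rop a k q v h = (\<Sum>u1\<in>UNIV. \<Sum>u2\<in>UNIV. Rw a q (h!k) (h!Suc k) u1 u2 * v (h[k:=u1, Suc k:=u2]))"

definition swp :: "nat \<Rightarrow> 'a list \<Rightarrow> 'a list" where
  "swp k zs = zs[k := zs!Suc k, Suc k := zs!k]"

lemma swp_Cons_Suc[simp]: "swp (Suc k) (z#zs) = z # swp k zs"
  by (simp add: swp_def)

lemma swp_0[simp]: "swp 0 (z1#z2#zs) = z2#z1#zs"
  by (simp add: swp_def)

lemma length_swp[simp]: "length (swp k zs) = length zs"
  by (simp add: swp_def)

lemma col_R:
  assumes "a \<noteq> 0" "Suc k < length zs" "zs!k \<noteq> 0" "zs!Suc k \<noteq> 0"
    and "length L = length zs" "length Rr = length zs"
  shows "(\<Sum>u1\<in>UNIV. \<Sum>u2\<in>UNIV. Rw a (zs!k/zs!Suc k) (L!k) (L!Suc k) u1 u2 * col a zs t b (L[k:=u1, Suc k:=u2]) Rr)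
       = (\<Sum>w1\<in>UNIV. \<Sum>w2\<in>UNIV. col a (swp k zs) t b L (Rr[k:=w1, Suc k:=w2]) * Rw a (zs!k/zs!Suc k) w1 w2 (Rr!k) (Rr!Suc k))"
  using assms
proof (induction k arbitrary: zs L Rr t)
  case 0
  then obtain z1 z2 zs0 where zs: "zs = z1#z2#zs0"
    by (metis Suc_length_conv less_Suc_eq_0_disj less_imp_Suc_add list.size(3) not_less_zero add_Suc_right)
  obtain l1 l2 L0 where L: "L = l1#l2#L0" using 0 zs
    by (metis Suc_length_conv length_Cons)
  obtain r1 r2 R0 where R: "Rr = r1#r2#R0" using 0 zs
    by (metis Suc_length_conv length_Cons)
  have y: "\<And>v2. (\<Sum>u1\<in>UNIV. \<Sum>u2\<in>UNIV. \<Sum>v1\<in>UNIV. Rw a (z1/z2) l1 l2 u1 u2 * vweight a z1 u1 r1 t v1 * vweight a z2 u2 r2 v1 v2)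
       = (\<Sum>w1\<in>UNIV. \<Sum>w2\<in>UNIV. \<Sum>v1\<in>UNIV. vweight a z2 l1 w1 t v1 * vweight a z1 l2 w2 v1 v2 * Rw a (z1/z2) w1 w2 r1 r2)"
    using ybeH 0 zs by simp
  define C where "C v2 = col a zs0 v2 b L0 R0" for v2
  have "(\<Sum>u1\<in>UNIV. \<Sum>u2\<in>UNIV. Rw a (zs!0/zs!Suc 0) (L!0) (L!Suc 0) u1 u2 * col a zs t b (L[0:=u1, Suc 0:=u2]) Rr)
     = (\<Sum>v2\<in>UNIV. (\<Sum>u1\<in>UNIV. \<Sum>u2\<in>UNIV. \<Sum>v1\<in>UNIV. Rw a (z1/z2) l1 l2 u1 u2 * vweight a z1 u1 r1 t v1 * vweight a z2 u2 r2 v1 v2) * C v2)"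
    unfolding zs L R C_def by (simp add: sum_bool algebra_simps)
  also have "\<dots> = (\<Sum>v2\<in>UNIV. (\<Sum>w1\<in>UNIV. \<Sum>w2\<in>UNIV. \<Sum>v1\<in>UNIV. vweight a z2 l1 w1 t v1 * vweight a z1 l2 w2 v1 v2 * Rw a (z1/z2) w1 w2 r1 r2) * C v2)"
    using y by simp
  also have "\<dots> = (\<Sum>w1\<in>UNIV. \<Sum>w2\<in>UNIV. col a (swp 0 zs) t b L (Rr[0:=w1, Suc 0:=w2]) * Rw a (zs!0/zs!Suc 0) w1 w2 (Rr!0) (Rr!Suc 0))"
    unfolding zs L R C_def by (simp add: sum_bool algebra_simps)
  finally show ?case .
next
  case (Suc k)
  then obtain z zs0 where zs: "zs = z#zs0" by (cases zs) auto
  obtain l L0 where L: "L = l#L0" using Suc zs by (cases L) auto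
  obtain r R0 where R: "Rr = r#R0" using Suc zs by (cases Rr) auto
  have IH: "\<And>t. (\<Sum>u1\<in>UNIV. \<Sum>u2\<in>UNIV. Rw a (zs0!k/zs0!Suc k) (L0!k) (L0!Suc k) u1 u2 * col a zs0 t b (L0[k:=u1, Suc k:=u2]) R0)
       = (\<Sum>w1\<in>UNIV. \<Sum>w2\<in>UNIV. col a (swp k zs0) t b L0 (R0[k:=w1, Suc k:=w2]) * Rw a (zs0!k/zs0!Suc k) w1 w2 (R0!k) (R0!Suc k))"
    using Suc zs L R by (intro Suc.IH) auto
  have "(\<Sum>u1\<in>UNIV. \<Sum>u2\<in>UNIV. Rw a (zs!Suc k/zs!Suc (Suc k)) (L!Suc k) (L!Suc (Suc k)) u1 u2 * col a zs t b (L[Suc k:=u1, Suc (Suc k):=u2]) Rr)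
     = (\<Sum>v\<in>UNIV. vweight a z l r t v * (\<Sum>u1\<in>UNIV. \<Sum>u2\<in>UNIV. Rw a (zs0!k/zs0!Suc k) (L0!k) (L0!Suc k) u1 u2 * col a zs0 v b (L0[k:=u1, Suc k:=u2]) R0))"
    unfolding zs L R by (simp add: sum_bool algebra_simps)
  also have "\<dots> = (\<Sum>v\<in>UNIV. vweight a z l r t v * (\<Sum>w1\<in>UNIV. \<Sum>w2\<in>UNIV. col a (swp k zs0) v b L0 (R0[k:=w1, Suc k:=w2]) * Rw a (zs0!k/zs0!Suc k) w1 w2 (R0!k) (R0!Suc k)))"
    by (simp only: IH)
  also have "\<dots> = (\<Sum>w1\<in>UNIV. \<Sum>w2\<in>UNIV. col a (swp (Suc k) zs) t b L (Rr[Suc k:=w1, Suc (Suc k):=w2]) * Rw a (zs!Suc k/zs!Suc (Suc k)) w1 w2 (Rr!Suc k) (Rr!Suc (Suc k)))"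
    unfolding zs L R by (simp add: sum_bool algebra_simps)
  finally show ?case .
qed

lemma upd2_upd2[simp]: "xs[k:=a, Suc k:=b, k:=c, Suc k:=d] = xs[k:=c, Suc k:=d]"
  by (metis list_update_overwrite list_update_swap n_not_Suc_n)

lemma upd2_id[simp]: "xs[k:=xs!k, Suc k:=xs!Suc k] = xs"
  by simp

lemma sum_blists_upd2:
  assumes "Suc k < n"
  shows "(\<Sum>h\<in>blists n. \<Sum>w1\<in>UNIV. \<Sum>w2\<in>UNIV. G h w1 w2)
       = (\<Sum>h\<in>blists n. \<Sum>w1\<in>UNIV. \<Sum>w2\<in>UNIV. G (h[k:=w1, Suc k:=w2]) (h!k) (h!Suc k))"
proof -
  define \<phi> where "\<phi> = (\<lambda>(h::bool list,w1::bool,w2::bool). (h[k:=w1, Suc k:=w2], h!k, h!Suc k))"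
  have "(\<Sum>h\<in>blists n. \<Sum>w1\<in>UNIV. \<Sum>w2\<in>UNIV. G h w1 w2) = (\<Sum>p\<in>blists n \<times> UNIV \<times> UNIV. G (fst p) (fst (snd p)) (snd (snd p)))"
    by (simp add: sum.cartesian_product split_def)
  also have "\<dots> = (\<Sum>p\<in>blists n \<times> UNIV \<times> UNIV. G (fst (\<phi> p)) (fst (snd (\<phi> p))) (snd (snd (\<phi> p))))"
  proof (rule sum.reindex_bij_witness[of _ \<phi> \<phi>])
    fix p assume "p \<in> blists n \<times> (UNIV::bool set) \<times> (UNIV::bool set)"
    then show "\<phi> (\<phi> p) = p" "\<phi> p \<in> blists n \<times> UNIV \<times> UNIV"
      using assms by (auto simp: \<phi>_def blists_def split: prod.splits)
  qed (use assms in \<open>auto simp: \<phi>_def blists_def\<close>)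
  also have "\<dots> = (\<Sum>h\<in>blists n. \<Sum>w1\<in>UNIV. \<Sum>w2\<in>UNIV. G (h[k:=w1, Suc k:=w2]) (h!k) (h!Suc k))"
    by (simp add: sum.cartesian_product split_def \<phi>_def)
  finally show ?thesis .
qed

lemma colop_R:
  assumes "a \<noteq> 0" "Suc k < length zs" "zs!k \<noteq> 0" "zs!Suc k \<noteq> 0" "length h = length zs"
  shows "Rop a k (zs!k/zs!Suc k) (\<lambda>h. \<Sum>h'\<in>blists (length h). col a zs True False h h' * v h') h
       = (\<Sum>h'\<in>blists (length h). col a (swp k zs) True False h h' * Rop a k (zs!k/zs!Suc k) v h')"
proof -
  let ?q = "zs!k/zs!Suc k"
  let ?N = "length h"
  have "Rop a k ?q (\<lambda>h. \<Sum>h'\<in>blists (length h). col a zs True False h h' * v h') h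
      = (\<Sum>u1\<in>UNIV. \<Sum>u2\<in>UNIV. Rw a ?q (h!k) (h!Suc k) u1 u2 * (\<Sum>h'\<in>blists ?N. col a zs True False (h[k:=u1, Suc k:=u2]) h' * v h'))"
    by (simp add: Rop_def)
  also have "\<dots> = (\<Sum>h'\<in>blists ?N. (\<Sum>u1\<in>UNIV. \<Sum>u2\<in>UNIV. Rw a ?q (h!k) (h!Suc k) u1 u2 * col a zs True False (h[k:=u1, Suc k:=u2]) h') * v h')"
    by (simp add: sum_distrib_left sum_distrib_right mult.assoc sum.swap[of _ "blists ?N"])
  also have "\<dots> = (\<Sum>h'\<in>blists ?N. (\<Sum>w1\<in>UNIV. \<Sum>w2\<in>UNIV. col a (swp k zs) True False h (h'[k:=w1, Suc k:=w2]) * Rw a ?q w1 w2 (h'!k) (h'!Suc k)) * v h')"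
    using assms by (intro sum.cong refl, subst col_R) (auto simp: blists_def)
  also have "\<dots> = (\<Sum>h'\<in>blists ?N. \<Sum>w1\<in>UNIV. \<Sum>w2\<in>UNIV. col a (swp k zs) True False h (h'[k:=w1, Suc k:=w2]) * Rw a ?q w1 w2 (h'!k) (h'!Suc k) * v ((h'[k:=w1, Suc k:=w2])[k:=h'!k, Suc k:=h'!Suc k]))"
    by (simp add: sum_distrib_right)
  also have "\<dots> = (\<Sum>h'\<in>blists ?N. \<Sum>w1\<in>UNIV. \<Sum>w2\<in>UNIV. col a (swp k zs) True False h h' * Rw a ?q (h'!k) (h'!Suc k) w1 w2 * v (h'[k:=w1, Suc k:=w2]))"
  proof -
    have "(\<Sum>h'\<in>blists ?N. \<Sum>w1\<in>UNIV. \<Sum>w2\<in>UNIV. col a (swp k zs) True False h h' * Rw a ?q (h'!k) (h'!Suc k) w1 w2 * v (h'[k:=w1, Suc k:=w2]))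
      = (\<Sum>h'\<in>blists ?N. \<Sum>w1\<in>UNIV. \<Sum>w2\<in>UNIV. col a (swp k zs) True False h (h'[k:=w1, Suc k:=w2]) * Rw a ?q ((h'[k:=w1, Suc k:=w2])!k) ((h'[k:=w1, Suc k:=w2])!Suc k) (h'!k) (h'!Suc k) * v ((h'[k:=w1, Suc k:=w2])[k:=h'!k, Suc k:=h'!Suc k]))"
      using assms by (intro sum_blists_upd2) simp
    also have "\<dots> = (\<Sum>h'\<in>blists ?N. \<Sum>w1\<in>UNIV. \<Sum>w2\<in>UNIV. col a (swp k zs) True False h (h'[k:=w1, Suc k:=w2]) * Rw a ?q w1 w2 (h'!k) (h'!Suc k) * v ((h'[k:=w1, Suc k:=w2])[k:=h'!k, Suc k:=h'!Suc k]))"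
      using assms by (intro sum.cong refl) (auto simp: blists_def nth_list_update)
    finally show ?thesis by simp
  qed
  also have "\<dots> = (\<Sum>h'\<in>blists ?N. col a (swp k zs) True False h h' * Rop a k ?q v h')"
    by (simp add: Rop_def sum_distrib_left mult.assoc)
  finally show ?thesis .
qed

lemma cols_R:
  assumes "a \<noteq> 0" "Suc k < N" "length h = N"
    and "\<forall>zs\<in>set zss. length zs = N \<and> zs!k \<noteq> 0 \<and> zs!Suc k \<noteq> 0 \<and> zs!k/zs!Suc k = q"
  shows "Rop a k q (cols a zss w) h = cols a (map (swp k) zss) (Rop a k q w) h"
  using assms
proof (induction zss arbitrary: h)
  case Nil
  then show ?case by (simp add: Rop_def)
next
  case (Cons zs zss)
  have q: "q = zs!k/zs!Suc k" using Cons by simp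
  have "Rop a k q (cols a (zs#zss) w) h = Rop a k q (\<lambda>h. \<Sum>h'\<in>blists (length h). col a zs True False h h' * cols a zss w h') h"
    by (simp add: Rop_def)
  also have "\<dots> = (\<Sum>h'\<in>blists (length h). col a (swp k zs) True False h h' * Rop a k q (cols a zss w) h')"
    unfolding q using Cons.prems by (intro colop_R) auto
  also have "\<dots> = (\<Sum>h'\<in>blists (length h). col a (swp k zs) True False h h' * cols a (map (swp k) zss) (Rop a k q w) h')"
    using Cons by (intro sum.cong refl) (auto simp: blists_def)
  also have "\<dots> = cols a (map (swp k) (zs#zss)) (Rop a k q w) h" by simp
  finally show ?case .
qed

lemma upd_replicate_same: "k < N \<Longrightarrow> (replicate N x)[k:=x] = replicate N x"
  by (simp add: list_update_same_conv)

lemma Rop_allT: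
  assumes "Suc k < N"
  shows "Rop a k q v (replicate N True) = sig (a^2 * inverse q) * v (replicate N True)"
proof -
  have "(replicate N True)[k := True, Suc k := True] = replicate N True"
    using assms by (simp add: upd_replicate_same)
  then show ?thesis using assms by (simp add: Rop_def sum_bool Rw_def)
qed

lemma cols_cong:
  assumes "\<And>h. length h = length h0 \<Longrightarrow> w h = w' h"
  shows "cols a zss w h0 = cols a zss w' h0"
  using assms
proof (induction zss arbitrary: h0)
  case Nil then show ?case by simp
next
  case (Cons zs zss)
  show ?case using Cons.prems
    by (simp, intro sum.cong refl arg_cong2[where f="(*)"] Cons.IH) (auto simp: blists_def)
qed

lemma cols_append: "cols a (zss1 @ zss2) w h = cols a zss1 (cols a zss2 w) h"
  by (induction zss1 arbitrary: h) auto

declare upt_Suc[simp del]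

definition zcol :: "nat \<Rightarrow> (nat \<Rightarrow> complex) \<Rightarrow> (nat \<Rightarrow> complex) \<Rightarrow> nat \<Rightarrow> complex list" where
  "zcol m x y j = map (\<lambda>r. spec m x y r j) [1..<2*m+2]"

definition zL :: "nat \<Rightarrow> (nat \<Rightarrow> complex) \<Rightarrow> (nat \<Rightarrow> complex) \<Rightarrow> complex list" where
  "zL m x y = map (\<lambda>r. spec m x y r (Suc m)) [m+2..<2*m+2]"

definition RR :: "nat \<Rightarrow> bool list \<Rightarrow> bool list" where
  "RR m h = map Not (rev (take m h))"

definition wl :: "complex \<Rightarrow> nat \<Rightarrow> (nat \<Rightarrow> complex) \<Rightarrow> (nat \<Rightarrow> complex) \<Rightarrow> bool list \<Rightarrow> complex" where
  "wl a m x y h = col a (zL m x y) (\<not> h!m) False (drop (Suc m) h) (RR m h)"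

definition Zc :: "nat \<Rightarrow> complex \<Rightarrow> (nat \<Rightarrow> complex) \<Rightarrow> (nat \<Rightarrow> complex) \<Rightarrow> complex" where
  "Zc m a x y = cols a (map (zcol m x y) [1..<Suc m]) (wl a m x y) (replicate (2*m+1) True)"

lemma nth_swp: "Suc k < length zs \<Longrightarrow> swp k zs ! i = (if i = k then zs!Suc k else if i = Suc k then zs!k else zs!i)"
  by (simp add: swp_def nth_list_update)

lemma length_zcol[simp]: "length (zcol m x y j) = 2*m+1" by (simp add: zcol_def)
lemma length_zL[simp]: "length (zL m x y) = m" by (simp add: zL_def)
lemma length_RR[simp]: "length h \<ge> m \<Longrightarrow> length (RR m h) = m" by (simp add: RR_def)

lemma nth_zcol: "i < 2*m+1 \<Longrightarrow> zcol m x y j ! i = x (min (Suc i) (2*m+1-i)) * inverse (y j)"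
  by (simp add: zcol_def spec_def)

lemma nth_zL: "i < m \<Longrightarrow> zL m x y ! i = x (m - i) * inverse (y (Suc m))"
proof -
  assume "i < m"
  then have "min (m+2+i) (2*m+2-(m+2+i)) = m - i" by simp
  then show ?thesis using \<open>i < m\<close> by (simp add: zL_def spec_def)
qed

lemma nth_RR: "i < m \<Longrightarrow> m \<le> length h \<Longrightarrow> RR m h ! i = (\<not> h!(m - Suc i))"
  by (simp add: RR_def rev_nth)

lemma RR_upd:
  assumes "Suc k < m" "m \<le> length h"
  shows "RR m (h[k:=u1, Suc k:=u2]) = (RR m h)[m-2-k := \<not>u2, m-1-k := \<not>u1]"
  using assms by (intro nth_equalityI) (auto simp: nth_RR nth_list_update)

lemma RR_upd_high:
  assumes "m \<le> k"
  shows "RR m (h[k:=u1, Suc k:=u2]) = RR m h"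
  using assms by (simp add: RR_def)

lemma drop_upd_high:
  assumes "Suc m \<le> k"
  shows "drop (Suc m) (h[k:=u1, Suc k:=u2]) = (drop (Suc m) h)[k - Suc m := u1, Suc (k - Suc m) := u2]"
proof -
  have "k - m = Suc (k - Suc m)" using assms by simp
  then show ?thesis using assms by (simp add: drop_update_swap)
qed

lemma sum_bool_neg_swap:
  "(\<Sum>u1\<in>UNIV. \<Sum>u2\<in>UNIV. f (\<not>u2) (\<not>u1)) = (\<Sum>w1\<in>(UNIV::bool set). \<Sum>w2\<in>(UNIV::bool set). f w1 w2)"
  by (simp add: sum_bool algebra_simps)

lemma turnaround:
  assumes a: "a \<noteq> 0" and km: "Suc (Suc k) \<le> m" and hl: "length h = 2*m+1"
    and x: "\<forall>i\<in>{1..m+1}. x i \<noteq> 0" and y: "y (Suc m) \<noteq> 0"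
  shows "Rop a k (x (Suc k) / x (Suc (Suc k))) (wl a m x y) h
       = Rop a (2*m-1-k) (x (Suc k) / x (Suc (Suc k))) (wl a m (x \<circ> Transposition.transpose (Suc k) (Suc (Suc k))) y) h"
proof -
  define x' where "x' = x \<circ> Transposition.transpose (Suc k) (Suc (Suc k))"
  define q where "q = x (Suc k) / x (Suc (Suc k))"
  define q' where "q' = m-2-k"
  define D where "D = drop (Suc m) h"
  define t where "t = (\<not> h!m)"
  have Dl: "length D = m" using hl by (simp add: D_def)
  have RRl: "length (RR m h) = m" using hl by simp
  have q'm: "Suc q' < m" using km by (simp add: q'_def)
  have RRq': "RR m h ! q' = (\<not> h!Suc k)" "RR m h ! Suc q' = (\<not> h!k)"
    using km hl by (auto simp: nth_RR q'_def intro!: arg_cong[where f="(!) h"])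
  have zLx': "zL m x' y ! q' / zL m x' y ! Suc q' = q"
    using km y x by (simp add: nth_zL q'_def x'_def q_def Suc_diff_Suc numeral_2_eq_2 field_simps)
  have zLne: "zL m x' y ! q' \<noteq> 0" "zL m x' y ! Suc q' \<noteq> 0"
    using km y x by (auto simp: nth_zL q'_def x'_def Suc_diff_Suc numeral_2_eq_2 transpose_eq_iff)
  have swpzL: "swp q' (zL m x' y) = zL m x y"
    using km by (intro nth_equalityI) (auto simp: nth_swp nth_zL q'_def x'_def transpose_def)
  have RRu: "RR m (h[k:=u1, Suc k:=u2]) = (RR m h)[q' := \<not>u2, Suc q' := \<not>u1]" for u1 u2
    using RR_upd[of k m h u1 u2] km hl by (simp add: q'_def Suc_diff_Suc numeral_2_eq_2)
  define K where "K = 2*m-1-k"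
  have KK: "K = Suc m + q'" using km by (simp add: K_def q'_def)
  have dK: "drop (Suc m) (h[K:=u1, Suc K:=u2]) = D[q':=u1, Suc q':=u2]" for u1 u2
    using drop_upd_high[of m K h u1 u2] KK by (simp add: D_def)
  have rK: "RR m (h[K:=u1, Suc K:=u2]) = RR m h" for u1 u2
    using RR_upd_high[of m K h u1 u2] KK by simp
  have mK: "(h[K:=u1, Suc K:=u2]) ! m = h ! m" for u1 u2
    using KK by (simp add: nth_list_update)
  have DK: "D!q' = h!K" "D!Suc q' = h!Suc K"
    using KK hl km by (simp_all add: D_def q'_def)
  have "Rop a k q (wl a m x y) h
      = (\<Sum>u1\<in>UNIV. \<Sum>u2\<in>UNIV. Rw a q (\<not>u2) (\<not>u1) (RR m h ! q') (RR m h ! Suc q') *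
            col a (zL m x y) t False D ((RR m h)[q' := \<not>u2, Suc q' := \<not>u1]))"
    unfolding Rop_def wl_def
    apply (intro sum.cong refl)
    apply (subst Rw_halfturn)
    using km hl by (simp add: RRu RRq' t_def D_def nth_list_update)
  also have "\<dots> = (\<Sum>w1\<in>UNIV. \<Sum>w2\<in>UNIV. Rw a q w1 w2 (RR m h ! q') (RR m h ! Suc q') *
            col a (zL m x y) t False D ((RR m h)[q' := w1, Suc q' := w2]))"
    by (rule sum_bool_neg_swap)
  also have "\<dots> = (\<Sum>w1\<in>UNIV. \<Sum>w2\<in>UNIV. col a (swp q' (zL m x' y)) t False D ((RR m h)[q' := w1, Suc q' := w2]) * Rw a (zL m x' y ! q' / zL m x' y ! Suc q') w1 w2 (RR m h ! q') (RR m h ! Suc q'))"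
    by (simp add: swpzL zLx' mult.commute)
  also have "\<dots> = (\<Sum>u1\<in>UNIV. \<Sum>u2\<in>UNIV. Rw a (zL m x' y ! q' / zL m x' y ! Suc q') (D!q') (D!Suc q') u1 u2 * col a (zL m x' y) t False (D[q':=u1, Suc q':=u2]) (RR m h))"
    using a q'm zLne Dl RRl by (intro col_R[symmetric]) auto
  also have "\<dots> = Rop a K q (wl a m x' y) h"
    unfolding Rop_def wl_def zLx'
    by (intro sum.cong refl) (simp add: dK rK mK DK t_def)
  finally show ?thesis unfolding q_def x'_def K_def .
qed

lemma min_row_range: "r < 2*m+1 \<Longrightarrow> min (Suc r) (2*m+1-r) \<in> {1..m+1}"
  by auto

lemma zcol_nz: "\<forall>i\<in>{1..m+1}. x i \<noteq> 0 \<Longrightarrow> y j \<noteq> 0 \<Longrightarrow> i < 2*m+1 \<Longrightarrow> zcol m x y j ! i \<noteq> 0"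
  using min_row_range[of i m] by (auto simp: nth_zcol)

lemma swp_zcol:
  assumes km: "Suc (Suc k) \<le> m"
  shows "swp k (zcol m x y j) = swp (2*m-1-k) (zcol m (x \<circ> Transposition.transpose (Suc k) (Suc (Suc k))) y j)"
proof (intro nth_equalityI)
  fix i assume "i < length (swp k (zcol m x y j))"
  then have i: "i < 2*m+1" by simp
  show "swp k (zcol m x y j) ! i = swp (2*m-1-k) (zcol m (x \<circ> Transposition.transpose (Suc k) (Suc (Suc k))) y j) ! i"
    using km i by (auto simp: nth_swp nth_zcol transpose_def min_def)
qed simp

lemma Zc_swapx_nd:
  assumes a: "a \<noteq> 0" and km: "Suc (Suc k) \<le> m"
    and x: "\<forall>i\<in>{1..m+1}. x i \<noteq> 0" and y: "\<forall>i\<in>{1..m+1}. y i \<noteq> 0"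
    and nd: "sig (a^2 * inverse (x (Suc k) / x (Suc (Suc k)))) \<noteq> 0"
  shows "Zc m a (x \<circ> Transposition.transpose (Suc k) (Suc (Suc k))) y = Zc m a x y"
proof -
  define x' where "x' = x \<circ> Transposition.transpose (Suc k) (Suc (Suc k))"
  define q where "q = x (Suc k) / x (Suc (Suc k))"
  define N where "N = 2*m+1"
  define K where "K = 2*m-1-k"
  define \<rho> where "\<rho> = sig (a^2 * inverse q)"
  have x': "\<forall>i\<in>{1..m+1}. x' i \<noteq> 0" using x km by (auto simp: x'_def transpose_def)
  have kN: "Suc k < N" "Suc K < N" using km by (auto simp: N_def K_def)
  have cx: "\<forall>zs\<in>set (map (zcol m x y) [1..<Suc m]). length zs = N \<and> zs!k \<noteq> 0 \<and> zs!Suc k \<noteq> 0 \<and> zs!k/zs!Suc k = q"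
  proof
    fix zs assume "zs \<in> set (map (zcol m x y) [1..<Suc m])"
    then obtain j where j: "j \<in> {1..m}" "zs = zcol m x y j" by (fastforce simp: less_Suc_eq_le)
    have "y j \<noteq> 0" using y j by auto
    moreover have "min (Suc k) (2*m+1-k) = Suc k" "min (Suc (Suc k)) (2*m+1-Suc k) = Suc (Suc k)" using km by auto
    ultimately show "length zs = N \<and> zs!k \<noteq> 0 \<and> zs!Suc k \<noteq> 0 \<and> zs!k/zs!Suc k = q"
      using j km x by (auto simp: N_def nth_zcol q_def field_simps)
  qed
  have cx': "\<forall>zs\<in>set (map (zcol m x' y) [1..<Suc m]). length zs = N \<and> zs!K \<noteq> 0 \<and> zs!Suc K \<noteq> 0 \<and> zs!K/zs!Suc K = q"
  proof
    fix zs assume "zs \<in> set (map (zcol m x' y) [1..<Suc m])"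
    then obtain j where j: "j \<in> {1..m}" "zs = zcol m x' y j" by (fastforce simp: less_Suc_eq_le)
    have "y j \<noteq> 0" using y j by auto
    moreover have "min (Suc K) (2*m+1-K) = Suc (Suc k)" "min (Suc (Suc K)) (2*m+1-Suc K) = Suc k" using km by (auto simp: K_def)
    moreover have "K < 2*m+1" "Suc K < 2*m+1" using km by (auto simp: K_def)
    ultimately show "length zs = N \<and> zs!K \<noteq> 0 \<and> zs!Suc K \<noteq> 0 \<and> zs!K/zs!Suc K = q"
      using j km x by (auto simp: N_def nth_zcol q_def field_simps x'_def)
  qed
  have sw: "map (swp k) (map (zcol m x y) [1..<Suc m]) = map (swp K) (map (zcol m x' y) [1..<Suc m])"
    using swp_zcol[OF km] by (simp add: K_def x'_def)
  have "\<rho> * Zc m a x y = Rop a k q (cols a (map (zcol m x y) [1..<Suc m]) (wl a m x y)) (replicate N True)"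
    by (simp only: Zc_def \<rho>_def N_def Rop_allT[OF kN(1)[unfolded N_def]])
  also have "\<dots> = cols a (map (swp k) (map (zcol m x y) [1..<Suc m])) (Rop a k q (wl a m x y)) (replicate N True)"
    using a kN cx by (intro cols_R) auto
  also have "\<dots> = cols a (map (swp K) (map (zcol m x' y) [1..<Suc m])) (Rop a K q (wl a m x' y)) (replicate N True)"
    unfolding sw
    by (rule cols_cong) (use turnaround[OF a km _ x] y in \<open>auto simp: q_def K_def x'_def N_def\<close>)
  also have "\<dots> = Rop a K q (cols a (map (zcol m x' y) [1..<Suc m]) (wl a m x' y)) (replicate N True)"
    using a kN cx' by (intro cols_R[symmetric]) auto
  also have "\<dots> = \<rho> * Zc m a x' y"
    by (simp only: Zc_def \<rho>_def N_def Rop_allT[OF kN(2)[unfolded N_def]])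
  finally have "\<rho> * Zc m a x y = \<rho> * Zc m a x' y" .
  moreover have "\<rho> \<noteq> 0" using nd by (simp add: \<rho>_def q_def)
  ultimately show ?thesis by (simp add: x'_def)
qed

definition dcol :: "complex \<Rightarrow> complex list \<Rightarrow> complex list \<Rightarrow> bool \<Rightarrow> bool \<Rightarrow> bool \<Rightarrow> bool \<Rightarrow> bool list \<Rightarrow> bool list \<Rightarrow> complex" where
  "dcol a zsA zsB t1 t2 b1 b2 L R = (\<Sum>M\<in>blists (length L). col a zsA t1 b1 L M * col a zsB t2 b2 M R)"

lemma dcol_Nil: "dcol a [] [] t1 t2 b1 b2 [] [] = (if t1 = b1 then 1 else 0) * (if t2 = b2 then 1 else 0)"
  by (simp add: dcol_def)

lemma dcol_Cons: "dcol a (z1#zsA) (z2#zsB) t1 t2 b1 b2 (l#L) (r#R) =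
  (\<Sum>mid\<in>UNIV. \<Sum>v1\<in>UNIV. \<Sum>v2\<in>UNIV. vweight a z1 l mid t1 v1 * vweight a z2 mid r t2 v2 * dcol a zsA zsB v1 v2 b1 b2 L R)"
  unfolding dcol_def
  by (simp add: sum_blists_Suc sum_bool sum.distrib sum_distrib_left algebra_simps)

lemma dcol_R:
  assumes "a \<noteq> 0" "length zsB = length zsA" "length L = length zsA" "length R = length zsA"
    and "\<forall>i<length zsA. zsA!i \<noteq> 0 \<and> zsB!i \<noteq> 0 \<and> zsA!i/zsB!i = q"
  shows "(\<Sum>s1\<in>UNIV. \<Sum>s2\<in>UNIV. Rw a q t1 t2 s1 s2 * dcol a zsA zsB s1 s2 b1 b2 L R)
       = (\<Sum>s1\<in>UNIV. \<Sum>s2\<in>UNIV. dcol a zsB zsA t1 t2 s1 s2 L R * Rw a q s1 s2 b1 b2)"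
  using assms
proof (induction zsA arbitrary: zsB L R t1 t2)
  case Nil
  then show ?case by (simp add: dcol_Nil sum_bool)
next
  case (Cons z1 A)
  obtain z2 B where zB: "zsB = z2#B" using Cons.prems by (cases zsB) auto
  obtain l L0 where L: "L = l#L0" using Cons.prems by (cases L) auto
  obtain r R0 where R: "R = r#R0" using Cons.prems by (cases R) auto
  have q: "q = z1/z2" "z1 \<noteq> 0" "z2 \<noteq> 0" using Cons.prems(5) zB by (auto dest: spec[of _ 0])
  have IH: "\<And>t1 t2. (\<Sum>s1\<in>UNIV. \<Sum>s2\<in>UNIV. Rw a q t1 t2 s1 s2 * dcol a A B s1 s2 b1 b2 L0 R0)
       = (\<Sum>s1\<in>UNIV. \<Sum>s2\<in>UNIV. dcol a B A t1 t2 s1 s2 L0 R0 * Rw a q s1 s2 b1 b2)"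
    using Cons.prems zB L R by (intro Cons.IH) auto
  have y: "\<And>v1 v2. (\<Sum>s1\<in>UNIV. \<Sum>s2\<in>UNIV. \<Sum>m\<in>UNIV. Rw a q t1 t2 s1 s2 * vweight a z1 l m s1 v1 * vweight a z2 m r s2 v2)
       = (\<Sum>m\<in>UNIV. \<Sum>u1\<in>UNIV. \<Sum>u2\<in>UNIV. vweight a z2 l m t1 u1 * vweight a z1 m r t2 u2 * Rw a q u1 u2 v1 v2)"
    unfolding q(1) using ybeV Cons.prems(1) q(2,3) by blast
  define D where "D v1 v2 = dcol a A B v1 v2 b1 b2 L0 R0" for v1 v2
  define E where "E u1 u2 = (\<Sum>s1\<in>UNIV. \<Sum>s2\<in>UNIV. dcol a B A u1 u2 s1 s2 L0 R0 * Rw a q s1 s2 b1 b2)" for u1 u2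
  have "(\<Sum>s1\<in>UNIV. \<Sum>s2\<in>UNIV. Rw a q t1 t2 s1 s2 * dcol a (z1#A) zsB s1 s2 b1 b2 L R)
      = (\<Sum>v1\<in>UNIV. \<Sum>v2\<in>UNIV. (\<Sum>s1\<in>UNIV. \<Sum>s2\<in>UNIV. \<Sum>m\<in>UNIV. Rw a q t1 t2 s1 s2 * vweight a z1 l m s1 v1 * vweight a z2 m r s2 v2) * D v1 v2)"
    unfolding zB L R dcol_Cons D_def by (simp add: sum_bool algebra_simps)
  also have "\<dots> = (\<Sum>v1\<in>UNIV. \<Sum>v2\<in>UNIV. (\<Sum>m\<in>UNIV. \<Sum>u1\<in>UNIV. \<Sum>u2\<in>UNIV. vweight a z2 l m t1 u1 * vweight a z1 m r t2 u2 * Rw a q u1 u2 v1 v2) * D v1 v2)"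
    by (simp only: y)
  also have "\<dots> = (\<Sum>m\<in>UNIV. \<Sum>u1\<in>UNIV. \<Sum>u2\<in>UNIV. vweight a z2 l m t1 u1 * vweight a z1 m r t2 u2 * (\<Sum>v1\<in>UNIV. \<Sum>v2\<in>UNIV. Rw a q u1 u2 v1 v2 * D v1 v2))"
    by (simp add: sum_bool algebra_simps)
  also have "\<dots> = (\<Sum>m\<in>UNIV. \<Sum>u1\<in>UNIV. \<Sum>u2\<in>UNIV. vweight a z2 l m t1 u1 * vweight a z1 m r t2 u2 * E u1 u2)"
    unfolding D_def E_def by (simp only: IH)
  also have "\<dots> = (\<Sum>s1\<in>UNIV. \<Sum>s2\<in>UNIV. dcol a zsB (z1#A) t1 t2 s1 s2 L R * Rw a q s1 s2 b1 b2)"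
    unfolding zB L R dcol_Cons E_def by (simp add: sum_bool algebra_simps)
  finally show ?case .
qed

lemma dcol_swap:
  assumes "a \<noteq> 0" "length zsB = length zsA" "length L = length zsA" "length R = length zsA"
    and "\<forall>i<length zsA. zsA!i \<noteq> 0 \<and> zsB!i \<noteq> 0 \<and> zsA!i/zsB!i = q"
    and "sig (a^2 * inverse q) \<noteq> 0"
  shows "dcol a zsA zsB True True False False L R = dcol a zsB zsA True True False False L R"
proof -
  have "(\<Sum>s1\<in>UNIV. \<Sum>s2\<in>UNIV. Rw a q True True s1 s2 * dcol a zsA zsB s1 s2 False False L R)
       = (\<Sum>s1\<in>UNIV. \<Sum>s2\<in>UNIV. dcol a zsB zsA True True s1 s2 L R * Rw a q s1 s2 False False)"
    using assms by (intro dcol_R) auto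
  then show ?thesis using assms(6) by (simp add: sum_bool Rw_def)
qed

lemma cols_two:
  assumes "length h = N"
  shows "cols a (A#B#rest) w h = (\<Sum>h''\<in>blists N. dcol a A B True True False False h h'' * cols a rest w h'')"
proof -
  have "cols a (A#B#rest) w h = (\<Sum>h'\<in>blists N. col a A True False h h' * (\<Sum>h''\<in>blists N. col a B True False h' h'' * cols a rest w h''))"
    using assms by (auto simp: blists_def intro!: sum.cong)
  also have "\<dots> = (\<Sum>h'\<in>blists N. \<Sum>h''\<in>blists N. col a A True False h h' * col a B True False h' h'' * cols a rest w h'')"
    by (simp add: sum_distrib_left mult.assoc)
  also have "\<dots> = (\<Sum>h''\<in>blists N. \<Sum>h'\<in>blists N. col a A True False h h' * col a B True False h' h'' * cols a rest w h'')"
    by (rule sum.swap)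
  also have "\<dots> = (\<Sum>h''\<in>blists N. dcol a A B True True False False h h'' * cols a rest w h'')"
    using assms by (simp add: dcol_def sum_distrib_right)
  finally show ?thesis .
qed

lemma upt_split3:
  assumes "1 \<le> j" "Suc j \<le> m"
  shows "[1..<Suc m] = [1..<j] @ j # Suc j # [Suc (Suc j)..<Suc m]"
proof -
  have "[1..<Suc m] = [1..<j] @ [j..<j + (Suc m - j)]"
    using assms upt_add_eq_append[of 1 j "Suc m - j"] by simp
  also have "[j..<j + (Suc m - j)] = j # Suc j # [Suc (Suc j)..<Suc m]"
    using assms by (simp add: upt_conv_Cons)
  finally show ?thesis .
qed

lemma Zc_swapy_nd:
  assumes a: "a \<noteq> 0" and j: "1 \<le> j" "Suc j \<le> m"
    and x: "\<forall>i\<in>{1..m+1}. x i \<noteq> 0" and y: "\<forall>i\<in>{1..m+1}. y i \<noteq> 0"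
    and nd: "sig (a^2 * inverse (y (Suc j) / y j)) \<noteq> 0"
  shows "Zc m a x (y \<circ> Transposition.transpose j (Suc j)) = Zc m a x y"
proof -
  define y' where "y' = y \<circ> Transposition.transpose j (Suc j)"
  define N where "N = 2*m+1"
  define A where "A = zcol m x y j"
  define B where "B = zcol m x y (Suc j)"
  define pre where "pre = map (zcol m x y) [1..<j]"
  define post where "post = map (zcol m x y) [Suc (Suc j)..<Suc m]"
  have e1: "map (zcol m x y) [1..<Suc m] = pre @ A # B # post"
    unfolding pre_def post_def A_def B_def using upt_split3[OF j] by simp
  have e2: "map (zcol m x y') [1..<Suc m] = pre @ B # A # post"
  proof -
    have "map (zcol m x y') [1..<j] = pre" unfolding pre_def
      by (auto simp: zcol_def spec_def y'_def)
    moreover have "map (zcol m x y') [Suc (Suc j)..<Suc m] = post" unfolding post_def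
      by (auto simp: zcol_def spec_def y'_def)
    moreover have "zcol m x y' j = B" "zcol m x y' (Suc j) = A"
      by (auto simp: zcol_def spec_def y'_def A_def B_def)
    ultimately show ?thesis using upt_split3[OF j] by simp
  qed
  have wl: "wl a m x y' = wl a m x y"
  proof -
    have "zL m x y' = zL m x y" using j by (auto simp: zL_def spec_def y'_def)
    then show ?thesis by (simp add: wl_def [abs_def])
  qed
  have sw: "cols a (B#A#post) (wl a m x y) h = cols a (A#B#post) (wl a m x y) h" if "length h = N" for h
  proof -
    have "dcol a B A True True False False h h'' = dcol a A B True True False False h h''" if "h'' \<in> blists N" for h''
    proof (rule dcol_swap[symmetric, where q = "y (Suc j) / y j"])
      show "\<forall>i<length A. A ! i \<noteq> 0 \<and> B ! i \<noteq> 0 \<and> A ! i / B ! i = y (Suc j) / y j"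
      proof (intro allI impI conjI)
        fix i assume i: "i < length A"
        have "y j \<noteq> 0" "y (Suc j) \<noteq> 0" using y j by auto
        then show "A!i \<noteq> 0" "B!i \<noteq> 0" using zcol_nz[OF x, where y=y and j=j and i=i] zcol_nz[OF x, where y=y and j="Suc j" and i=i] i by (auto simp: A_def B_def)
        have "x (min (Suc i) (2*m+1-i)) \<noteq> 0" using x i min_row_range[of i m] by (auto simp: A_def)
        then show "A ! i / B ! i = y (Suc j) / y j" using i y j by (auto simp: A_def B_def nth_zcol field_simps)
      qed
    qed (use a that \<open>length h = N\<close> nd in \<open>auto simp: A_def B_def N_def blists_def\<close>)
    then show ?thesis using cols_two[OF that] by (auto intro!: sum.cong)
  qed
  have "Zc m a x y' = cols a pre (cols a (B#A#post) (wl a m x y)) (replicate N True)"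
    unfolding Zc_def e2 wl N_def by (simp add: cols_append)
  also have "\<dots> = cols a pre (cols a (A#B#post) (wl a m x y)) (replicate N True)"
    by (rule cols_cong) (use sw in \<open>auto simp: N_def\<close>)
  also have "\<dots> = Zc m a x y"
    unfolding Zc_def e1 N_def by (simp add: cols_append)
  finally show ?thesis unfolding y'_def .
qed

lemma isCont_vw:
  assumes "a \<noteq> 0" "isCont f u0" "f u0 \<noteq> 0"
  shows "isCont (\<lambda>u. vweight a (f u) l r t b) u0"
  using assms by (cases l; cases r; cases t; cases b) (auto simp: vweight_def sig_def intro!: continuous_intros)

lemma isCont_col:
  assumes "a \<noteq> 0" "\<forall>f\<in>set fs. isCont f u0 \<and> f u0 \<noteq> 0"
  shows "isCont (\<lambda>u. col a (map (\<lambda>f. f u) fs) t b L R) u0"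
  using assms(2)
proof (induction fs arbitrary: t L R)
  case Nil
  then show ?case by (cases L; cases R) auto
next
  case (Cons f fs)
  show ?case
  proof (cases L)
    case Nil then show ?thesis by simp
  next
    case (Cons l L0)
    show ?thesis
    proof (cases R)
      case Nil then show ?thesis using Cons by simp
    next
      case (Cons r R0)
      show ?thesis using \<open>L = l#L0\<close> Cons Cons.IH Cons.prems \<open>a \<noteq> 0\<close>
        by (simp, intro continuous_intros isCont_vw) auto
    qed
  qed
qed

lemma isCont_cols:
  assumes "a \<noteq> 0" "\<forall>zsf\<in>set zssf. \<forall>f\<in>set zsf. isCont f u0 \<and> f u0 \<noteq> 0"
    and "\<And>h. isCont (\<lambda>u. w u h) u0"
  shows "isCont (\<lambda>u. cols a (map (map (\<lambda>f. f u)) zssf) (w u) h) u0"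
  using assms(2)
proof (induction zssf arbitrary: h)
  case Nil
  then show ?case using assms(3) by simp
next
  case (Cons zsf zssf)
  then show ?case using assms(1)
    by (simp, intro continuous_intros isCont_col) auto
qed

lemma isCont_Zc:
  assumes a: "a \<noteq> 0"
    and X: "\<forall>i\<in>{1..m+1}. isCont (\<lambda>u. X u i) u0 \<and> X u0 i \<noteq> 0"
    and Y: "\<forall>i\<in>{1..m+1}. isCont (\<lambda>u. Y u i) u0 \<and> Y u0 i \<noteq> 0"
  shows "isCont (\<lambda>u. Zc m a (X u) (Y u)) u0"
proof -
  define zssf where "zssf = map (\<lambda>j. map (\<lambda>r u. spec m (X u) (Y u) r j) [1..<2*m+2]) [1..<Suc m]"
  define zLf where "zLf = map (\<lambda>r u. spec m (X u) (Y u) r (Suc m)) [m+2..<2*m+2]"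
  have e: "Zc m a (X u) (Y u) = cols a (map (map (\<lambda>f. f u)) zssf) (\<lambda>h. col a (map (\<lambda>f. f u) zLf) (\<not> h!m) False (drop (Suc m) h) (RR m h)) (replicate (2*m+1) True)" for u
    by (simp add: Zc_def zssf_def zLf_def zcol_def[abs_def] zL_def wl_def[abs_def] comp_def)
  have sp: "isCont (\<lambda>u. spec m (X u) (Y u) r j) u0 \<and> spec m (X u0) (Y u0) r j \<noteq> 0"
    if "1 \<le> r" "r \<le> 2*m+1" "1 \<le> j" "j \<le> m+1" for r j
  proof -
    have "min r (2*m+2-r) \<in> {1..m+1}" using that by auto
    then show ?thesis using X Y that unfolding spec_def by (auto intro!: continuous_intros)
  qed
  show ?thesis unfolding e
  proof (rule isCont_cols[OF a])
    show "\<forall>zsf\<in>set zssf. \<forall>f\<in>set zsf. isCont f u0 \<and> f u0 \<noteq> 0"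
      unfolding zssf_def using sp by auto
    show "isCont (\<lambda>u. col a (map (\<lambda>f. f u) zLf) (\<not> h!m) False (drop (Suc m) h) (RR m h)) u0" for h
      by (rule isCont_col[OF a]) (use sp in \<open>auto simp: zLf_def\<close>)
  qed
qed

lemma cont_eq_extend:
  fixes f g :: "complex \<Rightarrow> complex"
  assumes "isCont f u0" "isCont g u0" "finite S" "\<And>u. u \<notin> S \<Longrightarrow> f u = g u"
  shows "f u0 = g u0"
proof -
  have "eventually (\<lambda>u. \<forall>s\<in>S. u \<noteq> s) (at u0)"
    using assms(3) by (intro eventually_ball_finite) (auto intro: eventually_neq_at_within)
  then have ev: "eventually (\<lambda>u. f u = g u) (at u0)"
    by eventually_elim (use assms(4) in auto)
  have "(f \<longlongrightarrow> f u0) (at u0)" using assms(1) isCont_def by blast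
  then have h1: "(g \<longlongrightarrow> f u0) (at u0)" using ev by (rule Lim_transform_eventually)
  have h2: "(g \<longlongrightarrow> g u0) (at u0)" using assms(2) isCont_def by blast
  show ?thesis using tendsto_unique[OF at_neq_bot h1 h2] .
qed

lemma sig_zero: "w \<noteq> 0 \<Longrightarrow> sig w = 0 \<Longrightarrow> w = 1 \<or> w = -1"
proof -
  assume "w \<noteq> 0" and h: "sig w = 0"
  then have "w * w = 1" using h by (simp add: sig_def field_simps)
  then have "(w - 1) * (w + 1) = 0" by (simp add: algebra_simps)
  then show ?thesis by (auto simp: eq_neg_iff_add_eq_0)
qed

lemma isCont_if_u: "isCont (\<lambda>u::complex. if P then u else c) u0"
  by (cases P) auto

lemma Zc_swapx:
  assumes a: "a \<noteq> 0" and km: "Suc (Suc k) \<le> m"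
    and x: "\<forall>i\<in>{1..m+1}. x i \<noteq> 0" and y: "\<forall>i\<in>{1..m+1}. y i \<noteq> 0"
  shows "Zc m a (x \<circ> Transposition.transpose (Suc k) (Suc (Suc k))) y = Zc m a x y"
proof -
  define \<tau> where "\<tau> = Transposition.transpose (Suc k) (Suc (Suc k))"
  define c where "c = x (Suc (Suc k))"
  have c: "c \<noteq> 0" using x km by (auto simp: c_def)
  define X where "X u = x(Suc k := u)" for u
  define S where "S = {0, a^2 * c, - (a^2 * c)}"
  have \<tau>r: "i \<in> {1..m+1} \<Longrightarrow> \<tau> i \<in> {1..m+1}" for i using km by (auto simp: \<tau>_def transpose_def)
  have contX: "\<forall>i\<in>{1..m+1}. isCont (\<lambda>u. X u i) (x (Suc k)) \<and> X (x (Suc k)) i \<noteq> 0"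
    using x by (auto simp: X_def isCont_if_u)
  have contXt: "\<forall>i\<in>{1..m+1}. isCont (\<lambda>u. (X u \<circ> \<tau>) i) (x (Suc k)) \<and> (X (x (Suc k)) \<circ> \<tau>) i \<noteq> 0"
    using x \<tau>r by (auto simp: X_def isCont_if_u)
  have contY: "\<forall>i\<in>{1..m+1}. isCont (\<lambda>u. y i) (x (Suc k)) \<and> y i \<noteq> 0" using y by auto
  have "Zc m a (X (x (Suc k)) \<circ> \<tau>) y = Zc m a (X (x (Suc k))) y"
  proof (rule cont_eq_extend[of "x (Suc k)" "\<lambda>u. Zc m a (X u \<circ> \<tau>) y" "\<lambda>u. Zc m a (X u) y" S, simplified])
    show "isCont (\<lambda>u. Zc m a (X u \<circ> \<tau>) y) (x (Suc k))"
      using contXt contY by (intro isCont_Zc[OF a]) auto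
    show "isCont (\<lambda>u. Zc m a (X u) y) (x (Suc k))"
      using contX contY by (intro isCont_Zc[OF a]) auto
    show "finite S" by (simp add: S_def)
    fix u assume u: "u \<notin> S"
    have Xu: "\<forall>i\<in>{1..m+1}. X u i \<noteq> 0" using x u by (auto simp: X_def S_def)
    have nd: "sig (a^2 * inverse (X u (Suc k) / X u (Suc (Suc k)))) \<noteq> 0"
    proof
      assume h: "sig (a^2 * inverse (X u (Suc k) / X u (Suc (Suc k)))) = 0"
      have w: "a^2 * inverse (X u (Suc k) / X u (Suc (Suc k))) = a^2 * c / u"
        by (simp add: X_def c_def field_simps)
      have "u \<noteq> 0" using u by (auto simp: S_def)
      then have "a^2 * c / u \<noteq> 0" using a c by simp
      from sig_zero[OF this] h w have "a^2 * c / u = 1 \<or> a^2 * c / u = -1" by simp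
      then have "u = a^2 * c \<or> u = -(a^2 * c)" using \<open>u \<noteq> 0\<close> by (auto simp: field_simps)
      then show False using u by (auto simp: S_def)
    qed
    show "Zc m a (X u \<circ> \<tau>) y = Zc m a (X u) y"
      unfolding \<tau>_def by (rule Zc_swapx_nd[OF a km Xu y nd])
  qed
  then show ?thesis by (simp add: X_def \<tau>_def)
qed

lemma Zc_swapy:
  assumes a: "a \<noteq> 0" and j: "1 \<le> j" "Suc j \<le> m"
    and x: "\<forall>i\<in>{1..m+1}. x i \<noteq> 0" and y: "\<forall>i\<in>{1..m+1}. y i \<noteq> 0"
  shows "Zc m a x (y \<circ> Transposition.transpose j (Suc j)) = Zc m a x y"
proof -
  define \<tau> where "\<tau> = Transposition.transpose j (Suc j)"
  define c where "c = y (Suc j)"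
  have c: "c \<noteq> 0" using y j by (auto simp: c_def)
  define Y where "Y u = y(j := u)" for u
  define S where "S = {0, c / a^2, - (c / a^2)}"
  have \<tau>r: "i \<in> {1..m+1} \<Longrightarrow> \<tau> i \<in> {1..m+1}" for i using j by (auto simp: \<tau>_def transpose_def)
  have contY: "\<forall>i\<in>{1..m+1}. isCont (\<lambda>u. Y u i) (y j) \<and> Y (y j) i \<noteq> 0"
    using y by (auto simp: Y_def isCont_if_u)
  have contYt: "\<forall>i\<in>{1..m+1}. isCont (\<lambda>u. (Y u \<circ> \<tau>) i) (y j) \<and> (Y (y j) \<circ> \<tau>) i \<noteq> 0"
    using y \<tau>r by (auto simp: Y_def isCont_if_u)
  have contX: "\<forall>i\<in>{1..m+1}. isCont (\<lambda>u. x i) (y j) \<and> x i \<noteq> 0" using x by auto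
  have "Zc m a x (Y (y j) \<circ> \<tau>) = Zc m a x (Y (y j))"
  proof (rule cont_eq_extend[of "y j" "\<lambda>u. Zc m a x (Y u \<circ> \<tau>)" "\<lambda>u. Zc m a x (Y u)" S, simplified])
    show "isCont (\<lambda>u. Zc m a x (Y u \<circ> \<tau>)) (y j)"
      using contX contYt by (intro isCont_Zc[OF a]) auto
    show "isCont (\<lambda>u. Zc m a x (Y u)) (y j)"
      using contX contY by (intro isCont_Zc[OF a]) auto
    show "finite S" by (simp add: S_def)
    fix u assume u: "u \<notin> S"
    have Yu: "\<forall>i\<in>{1..m+1}. Y u i \<noteq> 0" using y u by (auto simp: Y_def S_def)
    have nd: "sig (a^2 * inverse (Y u (Suc j) / Y u j)) \<noteq> 0"
    proof
      assume h: "sig (a^2 * inverse (Y u (Suc j) / Y u j)) = 0"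
      have w: "a^2 * inverse (Y u (Suc j) / Y u j) = a^2 * u / c"
        by (simp add: Y_def c_def field_simps)
      have "u \<noteq> 0" using u by (auto simp: S_def)
      then have "a^2 * u / c \<noteq> 0" using a c by simp
      from sig_zero[OF this] h w have "a^2 * u / c = 1 \<or> a^2 * u / c = -1" by simp
      then have "u = c / a^2 \<or> u = -(c / a^2)" using a c by (auto simp: field_simps)
      then show False using u by (auto simp: S_def)
    qed
    show "Zc m a x (Y u \<circ> \<tau>) = Zc m a x (Y u)"
      unfolding \<tau>_def by (rule Zc_swapy_nd[OF a j x Yu nd])
  qed
  then show ?thesis by (simp add: Y_def \<tau>_def)
qed

lemma perm_from_adj:
  fixes F :: "(nat \<Rightarrow> complex) \<Rightarrow> complex" and m :: nat
  defines "P \<equiv> \<lambda>x::nat \<Rightarrow> complex. \<forall>i\<in>{1..m+1}. x i \<noteq> 0"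
  assumes adj: "\<And>x i. P x \<Longrightarrow> 1 \<le> i \<Longrightarrow> Suc i \<le> m \<Longrightarrow> F (x \<circ> Transposition.transpose i (Suc i)) = F x"
  shows "P x \<Longrightarrow> \<pi> permutes {1..m} \<Longrightarrow> F (x \<circ> \<pi>) = F x"
proof -
  have Pt: "P (x \<circ> Transposition.transpose c d)" if "P x" "c \<in> {1..m}" "d \<in> {1..m}" for x c d
    using that unfolding P_def by (auto simp: transpose_def)
  have tr: "F (x \<circ> Transposition.transpose c (c + n)) = F x"
    if "P x" "1 \<le> c" "c + n \<le> m" "n \<ge> 1" for n c x
    using that
  proof (induction n arbitrary: x)
    case 0 then show ?case by simp
  next
    case (Suc n)
    show ?case
    proof (cases "n = 0")
      case True then show ?thesis using adj[of x c] Suc.prems by (simp add: comp_def)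
    next
      case False
      then have Suc: "P x" "1 \<le> c" "c + Suc n \<le> m" "1 \<le> n"
        "\<And>x. P x \<Longrightarrow> 1 \<le> c \<Longrightarrow> c + n \<le> m \<Longrightarrow> 1 \<le> n \<Longrightarrow> F (x \<circ> Transposition.transpose c (c + n)) = F x"
        using Suc.prems Suc.IH by (auto simp: comp_def)
    define d where "d = c + n"
    define t where "t = Transposition.transpose d (Suc d)"
    have eq: "Transposition.transpose c (c + Suc n) = t \<circ> Transposition.transpose c d \<circ> t"
      using Suc by (auto simp: fun_eq_iff transpose_def t_def d_def)
    have d: "1 \<le> d" "Suc d \<le> m" using Suc by (auto simp: d_def)
    have P1: "P (x \<circ> t)" unfolding t_def by (rule Pt) (use Suc d in auto)
    have P2: "P (x \<circ> t \<circ> Transposition.transpose c d)" by (rule Pt[OF P1]) (use Suc d in \<open>auto simp: d_def\<close>)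
    have "F (x \<circ> Transposition.transpose c (c + Suc n)) = F ((x \<circ> t \<circ> Transposition.transpose c d) \<circ> t)"
      unfolding eq by (simp add: comp_assoc)
    also have "\<dots> = F (x \<circ> t \<circ> Transposition.transpose c d)"
      unfolding t_def by (rule adj[OF P2[unfolded t_def] d])
    also have "\<dots> = F (x \<circ> t)"
      using Suc(5)[OF P1] Suc by (simp add: d_def)
    also have "\<dots> = F x" unfolding t_def by (rule adj[OF \<open>P x\<close> d])
    finally show ?thesis .
    qed
  qed
  have trans: "F (x \<circ> Transposition.transpose c d) = F x" if "P x" "c \<in> {1..m}" "d \<in> {1..m}" for x c d
  proof (cases "c = d")
    case True then show ?thesis by simp
  next
    case False
    show ?thesis
    proof (cases "c < d")
      case True
      then show ?thesis using tr[of x c "d - c"] that by auto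
    next
      case False
      then have "d < c" using \<open>c \<noteq> d\<close> by simp
      then show ?thesis using tr[of x d "c - d"] that by (auto simp: transpose_commute)
    qed
  qed
  show "P x \<Longrightarrow> \<pi> permutes {1..m} \<Longrightarrow> F (x \<circ> \<pi>) = F x"
  proof -
    assume "P x" "\<pi> permutes {1..m}"
    then show ?thesis
    proof (induction arbitrary: x rule: permutes_induct[OF \<open>\<pi> permutes {1..m}\<close> finite_atLeastAtMost])
      case 1 then show ?case by simp
    next
      case (2 c d p)
      have "F (x \<circ> (Transposition.transpose c d \<circ> p)) = F ((x \<circ> Transposition.transpose c d) \<circ> p)"
        by (simp add: comp_assoc)
      also have "\<dots> = F (x \<circ> Transposition.transpose c d)"
      proof -
        have "P (x \<circ> Transposition.transpose c d)" using Pt 2 by auto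
        then show ?thesis using 2 by (auto simp: comp_def)
      qed
      also have "\<dots> = F x" using trans 2 by auto
      finally show ?case .
    qed
  qed
qed

lemma sum_Pow_Un:
  assumes "finite A" "finite B" "A \<inter> B = {}"
  shows "(\<Sum>U\<in>Pow (A \<union> B). f U) = (\<Sum>S\<in>Pow A. \<Sum>T\<in>Pow B. f (S \<union> T))"
proof -
  have "(\<Sum>S\<in>Pow A. \<Sum>T\<in>Pow B. f (S \<union> T)) = (\<Sum>p\<in>Pow A \<times> Pow B. f (fst p \<union> snd p))"
    by (simp add: sum.cartesian_product split_def)
  also have "\<dots> = (\<Sum>U\<in>Pow (A \<union> B). f U)"
    by (rule sum.reindex_bij_witness[of _ "\<lambda>U. (U \<inter> A, U \<inter> B)" "\<lambda>p. fst p \<union> snd p"])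
       (use assms in auto)
  finally show ?thesis by simp
qed

lemma sum_Pow_insert:
  assumes "finite A" "a \<notin> A"
  shows "(\<Sum>U\<in>Pow (insert a A). f U) = (\<Sum>v\<in>UNIV. \<Sum>V\<in>Pow A. f (if v then insert a V else V))"
proof -
  have "(\<Sum>U\<in>Pow (insert a A). f U) = (\<Sum>U\<in>Pow ({a} \<union> A). f U)" by simp
  also have "\<dots> = (\<Sum>S\<in>Pow {a}. \<Sum>T\<in>Pow A. f (S \<union> T))"
    using assms by (intro sum_Pow_Un) auto
  also have "\<dots> = (\<Sum>T\<in>Pow A. f T) + (\<Sum>T\<in>Pow A. f (insert a T))"
  proof -
    have "Pow {a} = {{}, {a}}" by auto
    then show ?thesis by (simp add: sum.distrib)
  qed
  also have "\<dots> = (\<Sum>v\<in>UNIV. \<Sum>V\<in>Pow A. f (if v then insert a V else V))"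
    by (simp add: sum_bool)
  finally show ?thesis .
qed

lemma sum_Pow_UN_prod:
  fixes g :: "'i \<Rightarrow> 'a set \<Rightarrow> complex"
  assumes "finite I" "\<And>i. i \<in> I \<Longrightarrow> finite (D i)"
    and "\<And>i j. i \<in> I \<Longrightarrow> j \<in> I \<Longrightarrow> i \<noteq> j \<Longrightarrow> D i \<inter> D j = {}"
    and "\<And>i U. i \<in> I \<Longrightarrow> g i U = g i (U \<inter> D i)"
  shows "(\<Sum>U\<in>Pow (\<Union>i\<in>I. D i). \<Prod>i\<in>I. g i U) = (\<Prod>i\<in>I. \<Sum>U\<in>Pow (D i). g i U)"
  using assms
proof (induction I rule: finite_induct)
  case empty
  then show ?case by simp
next
  case (insert i I)
  define R where "R = (\<Union>j\<in>I. D j)"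
  have fR: "finite R" using insert.hyps insert.prems(1) by (auto simp: R_def)
  have dis: "D i \<inter> R = {}" using insert.hyps insert.prems(2) by (auto simp: R_def)
  have "(\<Sum>U\<in>Pow (\<Union>j\<in>insert i I. D j). \<Prod>j\<in>insert i I. g j U)
      = (\<Sum>S\<in>Pow (D i). \<Sum>T\<in>Pow R. \<Prod>j\<in>insert i I. g j (S \<union> T))"
    using insert.prems(1) fR dis by (simp add: R_def sum_Pow_Un)
  also have "\<dots> = (\<Sum>S\<in>Pow (D i). \<Sum>T\<in>Pow R. g i S * (\<Prod>j\<in>I. g j T))"
  proof (intro sum.cong refl)
    fix S T assume S: "S \<in> Pow (D i)" and T: "T \<in> Pow R"
    have "(S \<union> T) \<inter> D i = S" using S T dis by auto
    then have "g i (S \<union> T) = g i S"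
      using insert.prems(3)[of i "S \<union> T"] by simp
    moreover have "g j (S \<union> T) = g j T" if "j \<in> I" for j
    proof -
      have "(S \<union> T) \<inter> D j = T \<inter> D j"
        using S T insert.prems(2)[of i j] insert.hyps that by auto
      then show ?thesis using insert.prems(3)[of j "S \<union> T"] insert.prems(3)[of j T] that by simp
    qed
    ultimately show "(\<Prod>j\<in>insert i I. g j (S \<union> T)) = g i S * (\<Prod>j\<in>I. g j T)"
      using insert.hyps by simp
  qed
  also have "\<dots> = (\<Sum>S\<in>Pow (D i). g i S) * (\<Sum>T\<in>Pow R. \<Prod>j\<in>I. g j T)"
    by (simp only: sum_product)
  also have "\<dots> = (\<Prod>j\<in>insert i I. \<Sum>U\<in>Pow (D j). g j U)"
  proof -
    have "(\<Sum>T\<in>Pow R. \<Prod>j\<in>I. g j T) = (\<Prod>j\<in>I. \<Sum>U\<in>Pow (D j). g j U)"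
      unfolding R_def
    proof (rule insert.IH)
      show "\<And>i. i \<in> I \<Longrightarrow> finite (D i)" using insert.prems(1) by blast
      show "\<And>i j. i \<in> I \<Longrightarrow> j \<in> I \<Longrightarrow> i \<noteq> j \<Longrightarrow> D i \<inter> D j = {}" using insert.prems(2) by blast
      show "\<And>i U. i \<in> I \<Longrightarrow> g i U = g i (U \<inter> D i)" using insert.prems(3) by blast
    qed
    then show ?thesis using insert.hyps by simp
  qed
  finally show ?case .
qed

lemma colset:
  assumes "1 \<le> n"
  shows "(\<Sum>V\<in>Pow {Suc lo..<lo+n}. \<Prod>r\<in>{lo..<lo+n}. vweight a (zf r) (Lf r) (Rf r)
            (if r = lo then t else r \<in> V) (if r = lo+n-1 then b else Suc r \<in> V))
       = col a (map zf [lo..<lo+n]) t b (map Lf [lo..<lo+n]) (map Rf [lo..<lo+n])"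
  using assms
proof (induction n arbitrary: lo t rule: nat_induct_at_least)
  case base
  then show ?case by (simp add: sum_bool upt_conv_Cons)
next
  case (Suc n)
  have ins: "{Suc lo..<lo + Suc n} = insert (Suc lo) {Suc (Suc lo)..<Suc lo + n}"
    using Suc.hyps by auto
  have pr: "{lo..<lo + Suc n} = insert lo {Suc lo..<Suc lo + n}" by auto
  have "(\<Sum>V\<in>Pow {Suc lo..<lo + Suc n}. \<Prod>r\<in>{lo..<lo + Suc n}. vweight a (zf r) (Lf r) (Rf r)
            (if r = lo then t else r \<in> V) (if r = lo + Suc n - 1 then b else Suc r \<in> V))
     = (\<Sum>v\<in>UNIV. \<Sum>V\<in>Pow {Suc (Suc lo)..<Suc lo + n}. \<Prod>r\<in>{lo..<lo + Suc n}. vweight a (zf r) (Lf r) (Rf r)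
            (if r = lo then t else r \<in> (if v then insert (Suc lo) V else V)) (if r = lo + Suc n - 1 then b else Suc r \<in> (if v then insert (Suc lo) V else V)))"
    unfolding ins by (rule sum_Pow_insert) auto
  also have "\<dots> = (\<Sum>v\<in>UNIV. vweight a (zf lo) (Lf lo) (Rf lo) t v *
       (\<Sum>V\<in>Pow {Suc (Suc lo)..<Suc lo + n}. \<Prod>r\<in>{Suc lo..<Suc lo + n}. vweight a (zf r) (Lf r) (Rf r)
            (if r = Suc lo then v else r \<in> V) (if r = Suc lo + n - 1 then b else Suc r \<in> V)))"
  proof (intro sum.cong refl)
    fix v :: bool
    have "(\<Prod>r\<in>{lo..<lo + Suc n}. vweight a (zf r) (Lf r) (Rf r)
            (if r = lo then t else r \<in> (if v then insert (Suc lo) V else V)) (if r = lo + Suc n - 1 then b else Suc r \<in> (if v then insert (Suc lo) V else V)))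
        = vweight a (zf lo) (Lf lo) (Rf lo) t v * (\<Prod>r\<in>{Suc lo..<Suc lo + n}. vweight a (zf r) (Lf r) (Rf r)
            (if r = Suc lo then v else r \<in> V) (if r = Suc lo + n - 1 then b else Suc r \<in> V))"
      if V: "V \<in> Pow {Suc (Suc lo)..<Suc lo + n}" for V
    proof -
      have sv: "(Suc lo \<in> (if v then insert (Suc lo) V else V)) = v" using V by auto
      have ne: "lo \<noteq> lo + Suc n - 1" "n \<noteq> 0" using Suc.hyps by simp_all
      have nV: "Suc lo \<notin> V" using V by auto
      have "(\<Prod>r\<in>{lo..<lo + Suc n}. vweight a (zf r) (Lf r) (Rf r)
            (if r = lo then t else r \<in> (if v then insert (Suc lo) V else V)) (if r = lo + Suc n - 1 then b else Suc r \<in> (if v then insert (Suc lo) V else V)))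
        = vweight a (zf lo) (Lf lo) (Rf lo) t v * (\<Prod>r\<in>{Suc lo..<Suc lo + n}. vweight a (zf r) (Lf r) (Rf r)
            (if r = lo then t else r \<in> (if v then insert (Suc lo) V else V)) (if r = lo + Suc n - 1 then b else Suc r \<in> (if v then insert (Suc lo) V else V)))"
        unfolding pr by (subst prod.insert) (simp_all add: sv ne)
      also have "(\<Prod>r\<in>{Suc lo..<Suc lo + n}. vweight a (zf r) (Lf r) (Rf r)
            (if r = lo then t else r \<in> (if v then insert (Suc lo) V else V)) (if r = lo + Suc n - 1 then b else Suc r \<in> (if v then insert (Suc lo) V else V)))
        = (\<Prod>r\<in>{Suc lo..<Suc lo + n}. vweight a (zf r) (Lf r) (Rf r)
            (if r = Suc lo then v else r \<in> V) (if r = Suc lo + n - 1 then b else Suc r \<in> V))"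
        using nV by (intro prod.cong refl) auto
      finally show ?thesis .
    qed
    then show "(\<Sum>V\<in>Pow {Suc (Suc lo)..<Suc lo + n}. \<Prod>r\<in>{lo..<lo + Suc n}. vweight a (zf r) (Lf r) (Rf r)
            (if r = lo then t else r \<in> (if v then insert (Suc lo) V else V)) (if r = lo + Suc n - 1 then b else Suc r \<in> (if v then insert (Suc lo) V else V)))
      = vweight a (zf lo) (Lf lo) (Rf lo) t v *
       (\<Sum>V\<in>Pow {Suc (Suc lo)..<Suc lo + n}. \<Prod>r\<in>{Suc lo..<Suc lo + n}. vweight a (zf r) (Lf r) (Rf r)
            (if r = Suc lo then v else r \<in> V) (if r = Suc lo + n - 1 then b else Suc r \<in> V))"
      by (simp add: sum_distrib_left)
  qed
  also have "\<dots> = (\<Sum>v\<in>UNIV. vweight a (zf lo) (Lf lo) (Rf lo) t v *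
       col a (map zf [Suc lo..<Suc lo+n]) v b (map Lf [Suc lo..<Suc lo+n]) (map Rf [Suc lo..<Suc lo+n]))"
    using Suc.IH[of "Suc lo"] Suc.hyps by simp
  also have "\<dots> = col a (map zf [lo..<lo + Suc n]) t b (map Lf [lo..<lo + Suc n]) (map Rf [lo..<lo + Suc n])"
    by (simp add: upt_conv_Cons)
  finally show ?case .
qed

definition Wt :: "nat \<Rightarrow> complex \<Rightarrow> (nat \<Rightarrow> complex) \<Rightarrow> (nat \<Rightarrow> complex) \<Rightarrow> (nat \<times> nat) set \<Rightarrow> (nat \<times> nat) set \<Rightarrow> nat \<times> nat \<Rightarrow> complex" where
  "Wt m a x y H U v = vweight a (spec m x y (fst v) (snd v)) (left_right H (fst v) (snd v)) (right_right m H (fst v) (snd v))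
          (top_up m H U (fst v) (snd v)) (bot_up m U (fst v) (snd v))"

lemma sum_Pow_image:
  assumes "inj_on f A"
  shows "(\<Sum>U\<in>Pow (f ` A). G U) = (\<Sum>V\<in>Pow A. G (f ` V))"
proof -
  have "Pow (f ` A) = image f ` Pow A" by (rule image_Pow_surj[symmetric]) simp
  then show ?thesis using sum.reindex[OF inj_on_image_Pow[OF assms], of G] by simp
qed

lemma col_j:
  assumes "1 \<le> j" "j \<le> m"
  shows "(\<Sum>U\<in>Pow ((\<lambda>r. (r,j)) ` {2..<2*m+2}). \<Prod>v\<in>(\<lambda>r. (r,j)) ` {1..<2*m+2}. Wt m a x y H U v)
       = col a (zcol m x y j) True False (map (\<lambda>r. left_right H r j) [1..<2*m+2]) (map (\<lambda>r. (r,j)\<in>H) [1..<2*m+2])"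
proof -
  define f where "f = (\<lambda>r::nat. (r,j))"
  have inj: "inj_on f A" for A by (auto simp: f_def inj_on_def)
  have "(\<Sum>U\<in>Pow (f ` {2..<2*m+2}). \<Prod>v\<in>f ` {1..<2*m+2}. Wt m a x y H U v)
      = (\<Sum>V\<in>Pow {2..<2*m+2}. \<Prod>r\<in>{1..<2*m+2}. Wt m a x y H (f ` V) (f r))"
    by (simp add: sum_Pow_image[OF inj] prod.reindex[OF inj])
  also have "\<dots> = (\<Sum>V\<in>Pow {Suc 1..<1+(2*m+1)}. \<Prod>r\<in>{1..<1+(2*m+1)}. vweight a (spec m x y r j) (left_right H r j) ((r,j)\<in>H)
            (if r = 1 then True else r \<in> V) (if r = 1+(2*m+1)-1 then False else Suc r \<in> V))"
  proof (intro sum.cong prod.cong)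
    fix V r assume V: "V \<in> Pow {Suc 1..<1+(2*m+1)}" and r: "r \<in> {1..<1+(2*m+1)}"
    have "(r, j) \<in> f ` V \<longleftrightarrow> r \<in> V" for r by (auto simp: f_def)
    then show "Wt m a x y H (f ` V) (f r) = vweight a (spec m x y r j) (left_right H r j) ((r,j)\<in>H)
            (if r = 1 then True else r \<in> V) (if r = 1+(2*m+1)-1 then False else Suc r \<in> V)"
      using assms r by (simp add: Wt_def f_def top_up_def bot_up_def right_right_def)
  qed auto
  also have "\<dots> = col a (map (\<lambda>r. spec m x y r j) [1..<1+(2*m+1)]) True False (map (\<lambda>r. left_right H r j) [1..<1+(2*m+1)]) (map (\<lambda>r. (r,j)\<in>H) [1..<1+(2*m+1)])"
    by (rule colset) simp
  finally show ?thesis by (simp add: f_def zcol_def)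
qed

lemma col_last:
  assumes "1 \<le> m"
  shows "(\<Sum>U\<in>Pow ((\<lambda>r. (r,Suc m)) ` {m+3..<2*m+2}). \<Prod>v\<in>(\<lambda>r. (r,Suc m)) ` {m+2..<2*m+2}. Wt m a x y H U v)
       = col a (zL m x y) ((Suc m, m) \<notin> H) False (map (\<lambda>r. (r,m)\<in>H) [m+2..<2*m+2]) (map (\<lambda>r. (2*m+2-r,m)\<notin>H) [m+2..<2*m+2])"
proof -
  define f where "f = (\<lambda>r::nat. (r,Suc m))"
  have inj: "inj_on f A" for A by (auto simp: f_def inj_on_def)
  have "(\<Sum>U\<in>Pow (f ` {m+3..<2*m+2}). \<Prod>v\<in>f ` {m+2..<2*m+2}. Wt m a x y H U v)
      = (\<Sum>V\<in>Pow {m+3..<2*m+2}. \<Prod>r\<in>{m+2..<2*m+2}. Wt m a x y H (f ` V) (f r))"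
    by (simp add: sum_Pow_image[OF inj] prod.reindex[OF inj])
  also have "\<dots> = (\<Sum>V\<in>Pow {Suc (m+2)..<(m+2)+m}. \<Prod>r\<in>{m+2..<(m+2)+m}. vweight a (spec m x y r (Suc m)) ((r,m)\<in>H) ((2*m+2-r,m)\<notin>H)
            (if r = m+2 then (Suc m, m) \<notin> H else r \<in> V) (if r = (m+2)+m-1 then False else Suc r \<in> V))"
  proof (intro sum.cong prod.cong)
    fix V r assume V: "V \<in> Pow {Suc (m+2)..<(m+2)+m}" and r: "r \<in> {m+2..<(m+2)+m}"
    have "(r, Suc m) \<in> f ` V \<longleftrightarrow> r \<in> V" for r by (auto simp: f_def)
    then show "Wt m a x y H (f ` V) (f r) = vweight a (spec m x y r (Suc m)) ((r,m)\<in>H) ((2*m+2-r,m)\<notin>H)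
            (if r = m+2 then (Suc m, m) \<notin> H else r \<in> V) (if r = (m+2)+m-1 then False else Suc r \<in> V)"
      using assms r by (cases "r = m+2") (auto simp: Wt_def f_def top_up_def bot_up_def right_right_def left_right_def)
  qed (auto simp: numeral_3_eq_3)
  also have "\<dots> = col a (map (\<lambda>r. spec m x y r (Suc m)) [m+2..<(m+2)+m]) ((Suc m, m) \<notin> H) False (map (\<lambda>r. (r,m)\<in>H) [m+2..<(m+2)+m]) (map (\<lambda>r. (2*m+2-r,m)\<notin>H) [m+2..<(m+2)+m])"
    by (rule colset) (use assms in simp)
  moreover have "(m+2)+m = 2*m+2" by simp
  ultimately show ?thesis by (simp only: f_def zL_def)
qed

definition HL :: "nat \<Rightarrow> (nat \<times> nat) set \<Rightarrow> nat \<Rightarrow> bool list" where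
  "HL m H j = map (\<lambda>r. (r,j)\<in>H) [1..<2*m+2]"

lemma nth_HL: "k < 2*m+1 \<Longrightarrow> HL m H j ! k = ((Suc k, j) \<in> H)"
  by (simp add: HL_def)

lemma length_HL[simp]: "length (HL m H j) = 2*m+1" by (simp add: HL_def)

lemma wl_HL:
  assumes "1 \<le> m"
  shows "wl a m x y (HL m H m) = col a (zL m x y) ((Suc m, m) \<notin> H) False (map (\<lambda>r. (r,m)\<in>H) [m+2..<2*m+2]) (map (\<lambda>r. (2*m+2-r,m)\<notin>H) [m+2..<2*m+2])"
proof -
  have 1: "(\<not> HL m H m ! m) = ((Suc m, m) \<notin> H)" by (simp add: HL_def)
  have 2: "drop (Suc m) (HL m H m) = map (\<lambda>r. (r,m)\<in>H) [m+2..<2*m+2]"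
    by (simp add: HL_def drop_map)
  have 3: "RR m (HL m H m) = map (\<lambda>r. (2*m+2-r,m)\<notin>H) [m+2..<2*m+2]"
  proof (rule nth_equalityI)
    show "length (RR m (HL m H m)) = length (map (\<lambda>r. (2*m+2-r,m)\<notin>H) [m+2..<2*m+2])"
      by (simp add: HL_def)
    fix i assume "i < length (RR m (HL m H m))"
    then have i: "i < m" by (simp add: HL_def)
    have "2*m+2 - (m+2+i) = Suc (m - Suc i)" using i by simp
    then show "RR m (HL m H m) ! i = map (\<lambda>r. (2*m+2-r,m)\<notin>H) [m+2..<2*m+2] ! i"
      using i by (simp add: nth_RR nth_HL)
  qed
  show ?thesis unfolding wl_def 1 2 3 ..
qed

lemma sum_Pow_Hc:
  "(\<Sum>S\<in>Pow ((\<lambda>r. (r,j)) ` {1..<2*m+2}). \<phi> (HL m S j)) = (\<Sum>h\<in>blists (2*m+1). \<phi> h)"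
proof (rule sum.reindex_bij_witness[of _ "\<lambda>h. {(r,j) | r. 1 \<le> r \<and> r < 2*m+2 \<and> h!(r-1)}" "\<lambda>S. HL m S j"])
  fix S assume S: "S \<in> Pow ((\<lambda>r. (r,j)) ` {1..<2*m+2})"
  show "{(r,j) | r. 1 \<le> r \<and> r < 2*m+2 \<and> HL m S j!(r-1)} = S"
  proof
    show "{(r,j) | r. 1 \<le> r \<and> r < 2*m+2 \<and> HL m S j!(r-1)} \<subseteq> S"
      by (auto simp: nth_HL)
    show "S \<subseteq> {(r,j) | r. 1 \<le> r \<and> r < 2*m+2 \<and> HL m S j!(r-1)}"
    proof
      fix p assume p: "p \<in> S"
      then obtain r where r: "p = (r,j)" "1 \<le> r" "r < 2*m+2" using S by auto
      then have "HL m S j!(r-1)" using p by (simp add: nth_HL)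
      then show "p \<in> {(r,j) | r. 1 \<le> r \<and> r < 2*m+2 \<and> HL m S j!(r-1)}" using r by auto
    qed
  qed
  show "HL m S j \<in> blists (2*m+1)" by (simp add: blists_def)
  show "\<phi> (HL m S j) = \<phi> (HL m S j)" ..
next
  fix h assume h: "h \<in> blists (2*m+1)"
  show "HL m {(r,j) | r. 1 \<le> r \<and> r < 2*m+2 \<and> h!(r-1)} j = h"
    using h by (intro nth_equalityI) (auto simp: blists_def nth_HL)
  show "{(r,j) | r. 1 \<le> r \<and> r < 2*m+2 \<and> h!(r-1)} \<in> Pow ((\<lambda>r. (r,j)) ` {1..<2*m+2})"
    by auto
qed

definition Hd' :: "nat \<Rightarrow> nat \<Rightarrow> (nat \<times> nat) set" where
  "Hd' m k = {(r,j). 1 \<le> r \<and> r \<le> 2*m+1 \<and> k < j \<and> j \<le> m}"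

definition LL' :: "nat \<Rightarrow> bool list \<Rightarrow> nat \<Rightarrow> (nat \<times> nat) set \<Rightarrow> nat \<Rightarrow> bool list" where
  "LL' m h0 k H j = (if j = Suc k then h0 else HL m H (j-1))"

lemma finite_Hd'[simp]: "finite (Hd' m k)"
proof -
  have "Hd' m k \<subseteq> {1..2*m+1} \<times> {0..m}" by (auto simp: Hd'_def)
  then show ?thesis by (rule finite_subset) simp
qed

lemma HL_eq: "(\<And>r. 1 \<le> r \<Longrightarrow> r \<le> 2*m+1 \<Longrightarrow> ((r,j) \<in> A) = ((r,j) \<in> B)) \<Longrightarrow> HL m A j = HL m B j"
  by (auto simp: HL_def)

lemma claimE:
  assumes "d \<le> m" "length h0 = 2*m+1"
  shows "(\<Sum>H\<in>Pow (Hd' m (m-d)). (\<Prod>j\<in>{Suc (m-d)..m}. col a (zcol m x y j) True False (LL' m h0 (m-d) H j) (HL m H j))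
            * wl a m x y (if m - d = m then h0 else HL m H m))
       = cols a (map (zcol m x y) [Suc (m-d)..<Suc m]) (wl a m x y) h0"
  using assms
proof (induction d arbitrary: h0)
  case 0
  have "Hd' m m = {}" by (auto simp: Hd'_def)
  then show ?case by simp
next
  case (Suc d)
  define k where "k = m - Suc d"
  define k' where "k' = Suc k"
  have kk: "m - d = k'" "k < m" "k' \<le> m" using Suc.prems by (auto simp: k_def k'_def)
  define C where "C = (\<lambda>r. (r,k')) ` {1..<2*m+2}"
  have split: "Hd' m k = C \<union> Hd' m k'" "C \<inter> Hd' m k' = {}" "finite C"
    using kk by (auto simp: Hd'_def C_def k'_def)
  have IH: "(\<Sum>T\<in>Pow (Hd' m k'). (\<Prod>j\<in>{Suc k'..m}. col a (zcol m x y j) True False (LL' m h' k' T j) (HL m T j))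
            * wl a m x y (if k' = m then h' else HL m T m))
       = cols a (map (zcol m x y) [Suc k'..<Suc m]) (wl a m x y) h'" if "length h' = 2*m+1" for h'
    using Suc.IH[of h'] Suc.prems that kk by simp
  have F: "(\<Prod>j\<in>{Suc k..m}. col a (zcol m x y j) True False (LL' m h0 k (S \<union> T) j) (HL m (S \<union> T) j))
            * wl a m x y (if k = m then h0 else HL m (S \<union> T) m)
        = col a (zcol m x y k') True False h0 (HL m S k') *
          ((\<Prod>j\<in>{Suc k'..m}. col a (zcol m x y j) True False (LL' m (HL m S k') k' T j) (HL m T j))
            * wl a m x y (if k' = m then HL m S k' else HL m T m))"
    if S: "S \<in> Pow C" and T: "T \<in> Pow (Hd' m k')" for S T
  proof -
    have hS: "HL m (S \<union> T) k' = HL m S k'"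
      using T by (intro HL_eq) (auto simp: Hd'_def)
    have hT: "HL m (S \<union> T) j = HL m T j" if "k' < j" for j
      using S that by (intro HL_eq) (auto simp: C_def)
    have pr: "{Suc k..m} = insert k' {Suc k'..m}" using kk by (auto simp: k'_def)
    have "(\<Prod>j\<in>{Suc k..m}. col a (zcol m x y j) True False (LL' m h0 k (S \<union> T) j) (HL m (S \<union> T) j))
        = col a (zcol m x y k') True False h0 (HL m S k') *
          (\<Prod>j\<in>{Suc k'..m}. col a (zcol m x y j) True False (LL' m (HL m S k') k' T j) (HL m T j))"
    proof -
      have "(\<Prod>j\<in>{Suc k'..m}. col a (zcol m x y j) True False (LL' m h0 k (S \<union> T) j) (HL m (S \<union> T) j))
          = (\<Prod>j\<in>{Suc k'..m}. col a (zcol m x y j) True False (LL' m (HL m S k') k' T j) (HL m T j))"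
      proof (intro prod.cong refl)
        fix j assume j: "j \<in> {Suc k'..m}"
        have "LL' m h0 k (S \<union> T) j = LL' m (HL m S k') k' T j"
        proof (cases "j = Suc k'")
          case True then show ?thesis using hS by (simp add: LL'_def k'_def)
        next
          case False
          then have "k' < j - 1" "j \<noteq> Suc k" using j by (auto simp: k'_def)
          then show ?thesis using False hT[of "j-1"] by (simp add: LL'_def)
        qed
        then show "col a (zcol m x y j) True False (LL' m h0 k (S \<union> T) j) (HL m (S \<union> T) j)
                 = col a (zcol m x y j) True False (LL' m (HL m S k') k' T j) (HL m T j)"
          using hT j by simp
      qed
      then show ?thesis unfolding pr using hS by (simp add: LL'_def k'_def)
    qed
    moreover have "wl a m x y (if k = m then h0 else HL m (S \<union> T) m) = wl a m x y (if k' = m then HL m S k' else HL m T m)"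
      using kk hS hT[of m] by auto
    ultimately show ?thesis by (simp add: mult.assoc)
  qed
  have "(\<Sum>H\<in>Pow (Hd' m k). (\<Prod>j\<in>{Suc k..m}. col a (zcol m x y j) True False (LL' m h0 k H j) (HL m H j))
            * wl a m x y (if k = m then h0 else HL m H m))
      = (\<Sum>S\<in>Pow C. \<Sum>T\<in>Pow (Hd' m k'). (\<Prod>j\<in>{Suc k..m}. col a (zcol m x y j) True False (LL' m h0 k (S \<union> T) j) (HL m (S \<union> T) j))
            * wl a m x y (if k = m then h0 else HL m (S \<union> T) m))"
    unfolding split(1) using split by (intro sum_Pow_Un) auto
  also have "\<dots> = (\<Sum>S\<in>Pow C. col a (zcol m x y k') True False h0 (HL m S k') *
          cols a (map (zcol m x y) [Suc k'..<Suc m]) (wl a m x y) (HL m S k'))"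
  proof (intro sum.cong refl)
    fix S assume S: "S \<in> Pow C"
    have "(\<Sum>T\<in>Pow (Hd' m k'). (\<Prod>j\<in>{Suc k..m}. col a (zcol m x y j) True False (LL' m h0 k (S \<union> T) j) (HL m (S \<union> T) j))
            * wl a m x y (if k = m then h0 else HL m (S \<union> T) m))
        = (\<Sum>T\<in>Pow (Hd' m k'). col a (zcol m x y k') True False h0 (HL m S k') *
          ((\<Prod>j\<in>{Suc k'..m}. col a (zcol m x y j) True False (LL' m (HL m S k') k' T j) (HL m T j))
            * wl a m x y (if k' = m then HL m S k' else HL m T m)))"
      using F[OF S] by (intro sum.cong refl) auto
    also have "\<dots> = col a (zcol m x y k') True False h0 (HL m S k') *
          cols a (map (zcol m x y) [Suc k'..<Suc m]) (wl a m x y) (HL m S k')"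
      by (simp add: sum_distrib_left[symmetric] IH)
    finally show "(\<Sum>T\<in>Pow (Hd' m k'). (\<Prod>j\<in>{Suc k..m}. col a (zcol m x y j) True False (LL' m h0 k (S \<union> T) j) (HL m (S \<union> T) j))
            * wl a m x y (if k = m then h0 else HL m (S \<union> T) m)) = col a (zcol m x y k') True False h0 (HL m S k') *
          cols a (map (zcol m x y) [Suc k'..<Suc m]) (wl a m x y) (HL m S k')" .
  qed
  also have "\<dots> = (\<Sum>h\<in>blists (2*m+1). col a (zcol m x y k') True False h0 h *
          cols a (map (zcol m x y) [Suc k'..<Suc m]) (wl a m x y) h)"
    unfolding C_def by (rule sum_Pow_Hc)
  also have "\<dots> = cols a (map (zcol m x y) [Suc k..<Suc m]) (wl a m x y) h0"
    using kk Suc.prems by (simp add: upt_conv_Cons k'_def)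
  finally show ?case using kk by (simp add: k_def)
qed

lemma Hdom_eq: "ht_Hdom m = {1..2*m+1} \<times> {1..m}" by (auto simp: ht_Hdom_def)
lemma Udom_fin: "finite (ht_Udom m)"
proof -
  have "ht_Udom m \<subseteq> {1..2*m+1} \<times> {1..m+1}" by (auto simp: ht_Udom_def)
  then show ?thesis by (rule finite_subset) simp
qed
lemma verts_fin: "finite (ht_verts m)"
proof -
  have "ht_verts m \<subseteq> {1..2*m+1} \<times> {1..m+1}" by (auto simp: ht_verts_def)
  then show ?thesis by (rule finite_subset) simp
qed

lemma ZHT_expand:
  "Z_HT m a x y = (\<Sum>H\<in>Pow (ht_Hdom m). \<Sum>U\<in>Pow (ht_Udom m). \<Prod>v\<in>ht_verts m. Wt m a x y H U v)"
proof -
  have fin: "finite (ht_states m)" by (simp add: ht_states_def Hdom_eq Udom_fin)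
  have "Z_HT m a x y = (\<Sum>s\<in>{s\<in>ht_states m. ht_valid m s}. \<Prod>v\<in>ht_verts m. Wt m a x y (fst s) (snd s) v)"
    unfolding Z_HT_def Wt_def by (simp add: split_def)
  also have "\<dots> = (\<Sum>s\<in>ht_states m. \<Prod>v\<in>ht_verts m. Wt m a x y (fst s) (snd s) v)"
  proof (rule sum.mono_neutral_left[OF fin])
    show "{s \<in> ht_states m. ht_valid m s} \<subseteq> ht_states m" by auto
    show "\<forall>s\<in>ht_states m - {s \<in> ht_states m. ht_valid m s}. (\<Prod>v\<in>ht_verts m. Wt m a x y (fst s) (snd s) v) = 0"
    proof
      fix s assume "s \<in> ht_states m - {s \<in> ht_states m. ht_valid m s}"
      then have "\<not> ht_valid m s" by auto
      then obtain r j where rj: "(r,j) \<in> ht_verts m"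
        "\<not> ice (left_right (fst s) r j) (right_right m (fst s) r j) (top_up m (fst s) (snd s) r j) (bot_up m (snd s) r j)"
        unfolding ht_valid_def by auto
      then have "Wt m a x y (fst s) (snd s) (r,j) = 0" by (simp add: Wt_def vweight_ice)
      then show "(\<Prod>v\<in>ht_verts m. Wt m a x y (fst s) (snd s) v) = 0"
        using rj(1) verts_fin by (intro prod_zero) auto
    qed
  qed
  also have "\<dots> = (\<Sum>H\<in>Pow (ht_Hdom m). \<Sum>U\<in>Pow (ht_Udom m). \<Prod>v\<in>ht_verts m. Wt m a x y H U v)"
    unfolding ht_states_def by (simp add: sum.cartesian_product split_def)
  finally show ?thesis .
qed

definition Vcol :: "nat \<Rightarrow> nat \<Rightarrow> (nat \<times> nat) set" where
  "Vcol m j = (\<lambda>r. (r,j)) ` (if j \<le> m then {1..<2*m+2} else {m+2..<2*m+2})"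
definition Ucol :: "nat \<Rightarrow> nat \<Rightarrow> (nat \<times> nat) set" where
  "Ucol m j = (\<lambda>r. (r,j)) ` (if j \<le> m then {2..<2*m+2} else {m+3..<2*m+2})"

lemma verts_UN: "ht_verts m = (\<Union>j\<in>{1..m+1}. Vcol m j)"
  by (auto simp: ht_verts_def Vcol_def image_iff split: if_splits)

lemma Udom_UN: "ht_Udom m = (\<Union>j\<in>{1..m+1}. Ucol m j)"
  by (auto simp: ht_Udom_def Ucol_def image_iff split: if_splits)

lemma Wt_local:
  assumes "v \<in> Vcol m j" "j \<le> m+1"
  shows "Wt m a x y H U v = Wt m a x y H (U \<inter> Ucol m j) v"
proof -
  obtain r where v: "v = (r,j)" and r: "r \<in> (if j \<le> m then {1..<2*m+2} else {m+2..<2*m+2})"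
    using assms by (auto simp: Vcol_def)
  have t: "top_up m H U r j = top_up m H (U \<inter> Ucol m j) r j"
    using r assms(2) by (auto simp: top_up_def Ucol_def image_iff split: if_splits)
  have b: "bot_up m U r j = bot_up m (U \<inter> Ucol m j) r j"
    using r assms(2) by (auto simp: bot_up_def Ucol_def image_iff split: if_splits)
  show ?thesis unfolding v Wt_def using t b by simp
qed

lemma sumU_prod:
  "(\<Sum>U\<in>Pow (ht_Udom m). \<Prod>v\<in>ht_verts m. Wt m a x y H U v)
   = (\<Prod>j\<in>{1..m+1}. \<Sum>U\<in>Pow (Ucol m j). \<Prod>v\<in>Vcol m j. Wt m a x y H U v)"
proof -
  have "(\<Prod>v\<in>ht_verts m. Wt m a x y H U v) = (\<Prod>j\<in>{1..m+1}. \<Prod>v\<in>Vcol m j. Wt m a x y H U v)" for U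
    unfolding verts_UN
    by (rule prod.UNION_disjoint) (auto simp: Vcol_def)
  then have "(\<Sum>U\<in>Pow (ht_Udom m). \<Prod>v\<in>ht_verts m. Wt m a x y H U v)
      = (\<Sum>U\<in>Pow (\<Union>j\<in>{1..m+1}. Ucol m j). \<Prod>j\<in>{1..m+1}. \<Prod>v\<in>Vcol m j. Wt m a x y H U v)"
    unfolding Udom_UN by simp
  also have "\<dots> = (\<Prod>j\<in>{1..m+1}. \<Sum>U\<in>Pow (Ucol m j). \<Prod>v\<in>Vcol m j. Wt m a x y H U v)"
  proof (rule sum_Pow_UN_prod)
    show "\<And>i j. i \<in> {1..m + 1} \<Longrightarrow> j \<in> {1..m + 1} \<Longrightarrow> i \<noteq> j \<Longrightarrow> Ucol m i \<inter> Ucol m j = {}"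
      by (auto simp: Ucol_def)
    show "\<And>i. i \<in> {1..m + 1} \<Longrightarrow> finite (Ucol m i)" by (simp add: Ucol_def)
    show "\<And>i U. i \<in> {1..m + 1} \<Longrightarrow> (\<Prod>v\<in>Vcol m i. Wt m a x y H U v) = (\<Prod>v\<in>Vcol m i. Wt m a x y H (U \<inter> Ucol m i) v)"
      by (intro prod.cong refl Wt_local) auto
  qed simp
  finally show ?thesis .
qed

lemma ZHT_Zc:
  assumes "1 \<le> m"
  shows "Z_HT m a x y = Zc m a x y"
proof -
  define h0 where "h0 = replicate (2*m+1) True"
  have S: "(\<Sum>U\<in>Pow (Ucol m j). \<Prod>v\<in>Vcol m j. Wt m a x y H U v) = col a (zcol m x y j) True False (LL' m h0 0 H j) (HL m H j)"
    if "j \<in> {1..m}" for j H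
  proof -
    have "map (\<lambda>r. left_right H r j) [1..<2*m+2] = LL' m h0 0 H j"
      by (intro nth_equalityI) (auto simp: LL'_def h0_def left_right_def nth_HL nth_Cons')
    then show ?thesis using col_j[of j m a x y H] that by (simp add: Ucol_def Vcol_def HL_def)
  qed
  have L: "(\<Sum>U\<in>Pow (Ucol m (Suc m)). \<Prod>v\<in>Vcol m (Suc m). Wt m a x y H U v) = wl a m x y (HL m H m)" for H
    using col_last[OF assms, of a x y H] wl_HL[OF assms, of a x y H] by (simp add: Ucol_def Vcol_def)
  have "Z_HT m a x y = (\<Sum>H\<in>Pow (ht_Hdom m). \<Prod>j\<in>{1..m+1}. \<Sum>U\<in>Pow (Ucol m j). \<Prod>v\<in>Vcol m j. Wt m a x y H U v)"
    by (simp add: ZHT_expand sumU_prod)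
  also have "\<dots> = (\<Sum>H\<in>Pow (Hd' m (m-m)). (\<Prod>j\<in>{Suc (m-m)..m}. col a (zcol m x y j) True False (LL' m h0 (m-m) H j) (HL m H j))
            * wl a m x y (if m - m = m then h0 else HL m H m))"
  proof -
    have "ht_Hdom m = Hd' m 0" by (auto simp: ht_Hdom_def Hd'_def)
    moreover have "{1..m+1} = insert (Suc m) {1..m}" by auto
    ultimately show ?thesis using assms by (simp add: S L mult.commute)
  qed
  also have "\<dots> = cols a (map (zcol m x y) [Suc (m-m)..<Suc m]) (wl a m x y) h0"
    by (rule claimE) (simp_all add: h0_def)
  also have "\<dots> = Zc m a x y" by (simp add: Zc_def h0_def)
  finally show ?thesis .
qed

lemma ZHT_0: "Z_HT 0 a x y = 1"
proof -
  have "ht_states 0 = {({}, {})}" by (auto simp: ht_states_def ht_Hdom_def ht_Udom_def)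
  moreover have "ht_verts 0 = {}" by (auto simp: ht_verts_def)
  ultimately show ?thesis by (simp add: Z_HT_def ht_valid_def)
qed

lemma Zc_0: "Zc 0 a x y = 1"
  by (simp add: Zc_def wl_def zL_def RR_def)

lemma ZHT_Zc_all: "Z_HT m a x y = Zc m a x y"
  using ZHT_Zc[of m] ZHT_0 Zc_0 by (cases "m = 0") auto

lemma col_snoc:
  assumes "length L = length zs" "length R = length zs"
  shows "col a (zs@[z]) t b (L@[l]) (R@[r]) = (\<Sum>v\<in>UNIV. col a zs t v L R * vweight a z l r v b)"
  using assms
proof (induction zs arbitrary: L R t)
  case Nil
  then show ?case by (simp add: sum_bool)
next
  case (Cons z0 zs)
  obtain l0 L0 where L: "L = l0#L0" using Cons.prems by (cases L) auto
  obtain r0 R0 where R: "R = r0#R0" using Cons.prems by (cases R) auto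
  have IH: "\<And>t. col a (zs@[z]) t b (L0@[l]) (R0@[r]) = (\<Sum>v\<in>UNIV. col a zs t v L0 R0 * vweight a z l r v b)"
    using Cons L R by auto
  show ?case unfolding L R by (simp add: IH sum_bool algebra_simps)
qed

lemma col_topF: "col a (z#zs) True b (False#L) (r#R) = (if r then 0 else sig (a * inverse z) * col a zs True b L R)"
  by (simp add: sum_bool vweight_def)

lemma col_botF:
  assumes "length L = length zs" "length R = length zs"
  shows "col a (zs@[z]) t False (L@[False]) (R@[r]) = (if r then 0 else sig (a * z) * col a zs t False L R)"
  using assms by (simp add: col_snoc sum_bool vweight_def)

lemma col_botT:
  assumes "length L = length zs" "length R = length zs"
  shows "col a (zs@[z]) t False (L@[True]) (R@[r]) = (if r then sig (a * inverse z) * col a zs t False L R else sig (a^2) * col a zs t True L R)"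
  using assms by (simp add: col_snoc sum_bool vweight_def mult.commute)

lemma col_down:
  "length R = length zs \<Longrightarrow> col a zs False False (replicate (length zs) True) R
     = (if R = replicate (length zs) True then (\<Prod>z\<leftarrow>zs. sig (a * inverse z)) else 0)"
proof (induction zs arbitrary: R)
  case Nil then show ?case by simp
next
  case (Cons z zs)
  then obtain r R0 where R: "R = r#R0" by (cases R) auto
  show ?case using Cons R by (simp add: sum_bool vweight_def)
qed

lemma col_first:
  assumes "a \<noteq> 0" "length R = length zs"
  shows "col a (inverse a # zs) True False (True # replicate (length zs) True) (r#R)
     = (if r = False \<and> R = replicate (length zs) True then sig (a^2) * (\<Prod>z\<leftarrow>zs. sig (a * inverse z)) else 0)"
proof -
  have s1: "sig (a * inverse a) = 0" using assms by (simp add: sig_def)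
  show ?thesis using assms col_down[OF assms(2), of a] s1 by (simp add: sum_bool vweight_def)
qed

lemma sum_blists_snoc:
  "(\<Sum>h\<in>blists (Suc k). f h) = (\<Sum>d\<in>UNIV. \<Sum>h\<in>blists k. f (h @ [d]))"
proof (induction k arbitrary: f)
  case 0
  then show ?case by (simp add: sum_blists_Suc)
next
  case (Suc k)
  have "(\<Sum>h\<in>blists (Suc (Suc k)). f h) = (\<Sum>b\<in>UNIV. \<Sum>h\<in>blists (Suc k). f (b#h))"
    by (rule sum_blists_Suc)
  also have "\<dots> = (\<Sum>b\<in>UNIV. \<Sum>d\<in>UNIV. \<Sum>h\<in>blists k. f (b#h@[d]))"
    using Suc.IH by simp
  also have "\<dots> = (\<Sum>d\<in>UNIV. \<Sum>b\<in>UNIV. \<Sum>h\<in>blists k. f ((b#h)@[d]))"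
    by (subst sum.swap) simp
  also have "\<dots> = (\<Sum>d\<in>UNIV. \<Sum>h\<in>blists (Suc k). f (h@[d]))"
    by (simp add: sum_blists_Suc)
  finally show ?case .
qed

lemma zcol_split:
  assumes "1 \<le> j"
  shows "zcol (Suc n) x y j = (x 1 * inverse (y j)) # zcol n (\<lambda>i. x (i+1)) (\<lambda>i. y (i+1)) (j-1) @ [x 1 * inverse (y j)]"
proof -
  have u: "[1..<2 * Suc n + 2] = 1 # map Suc [1..<2*n+2] @ [2*n+3]"
    by (simp add: map_Suc_upt upt_conv_Cons upt_Suc)
  have "spec (Suc n) x y (Suc r) j = spec n (\<lambda>i. x (i+1)) (\<lambda>i. y (i+1)) r (j-1)" if "r \<in> set [1..<2*n+2]" for r
  proof -
    have "min (Suc r) (2 * Suc n + 2 - Suc r) = Suc (min r (2*n+2-r))" using that by auto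
    then show ?thesis using assms by (simp add: spec_def)
  qed
  then show ?thesis unfolding zcol_def u
    by (simp add: spec_def)
qed

lemma zL_split:
  "zL (Suc n) x y = zL n (\<lambda>i. x (i+1)) (\<lambda>i. y (i+1)) @ [x 1 * inverse (y (Suc (Suc n)))]"
proof -
  have u: "[Suc n + 2..<2 * Suc n + 2] = map Suc [n+2..<2*n+2] @ [2*n+3]"
    by (simp add: map_Suc_upt upt_Suc)
  have "spec (Suc n) x y (Suc r) (Suc (Suc n)) = spec n (\<lambda>i. x (i+1)) (\<lambda>i. y (i+1)) r (Suc n)" if "r \<in> set [n+2..<2*n+2]" for r
  proof -
    have "min (Suc r) (2 * Suc n + 2 - Suc r) = Suc (min r (2*n+2-r))" using that by auto
    then show ?thesis by (simp add: spec_def)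
  qed
  then show ?thesis unfolding zL_def u
    by (simp add: spec_def)
qed

lemma wl_split:
  assumes "length mid = 2*n+1"
  shows "wl a (Suc n) x y (False # mid @ [True])
       = sig (a * inverse (x 1 * inverse (y (Suc (Suc n))))) * wl a n (\<lambda>i. x (i+1)) (\<lambda>i. y (i+1)) mid"
proof -
  have d: "drop (Suc (Suc n)) (False # mid @ [True]) = drop (Suc n) mid @ [True]"
    using assms by simp
  have t: "take (Suc n) (False # mid @ [True]) = False # take n mid" using assms by simp
  have r: "RR (Suc n) (False # mid @ [True]) = RR n mid @ [True]"
    unfolding RR_def t by simp
  have h: "(False # mid @ [True]) ! Suc n = mid ! n" using assms by (simp add: nth_append)
  show ?thesis unfolding wl_def zL_split d r h
    by (subst col_botT) (use assms in \<open>simp_all add: RR_def\<close>)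
qed

lemma col_zero_hd:
  assumes "R \<noteq> []" "hd R"
  shows "col a zs True b (False#L) R = 0"
proof (cases zs)
  case Nil then show ?thesis by simp
next
  case (Cons z zs0)
  obtain r R0 where "R = r#R0" using assms by (cases R) auto
  then show ?thesis using assms Cons by (simp add: sum_bool vweight_def)
qed

lemma col_zero_last:
  assumes "length L = length zs" "length R = length zs" "zs \<noteq> []" "\<not> last L" "last R"
  shows "col a zs t False L R = 0"
proof -
  have ne: "L \<noteq> []" "R \<noteq> []" using assms by auto
  have e: "last L = False" "last R = True" using assms by auto
  have "zs = butlast zs @ [last zs]" "L = butlast L @ [False]" "R = butlast R @ [True]"
    using assms(3) append_butlast_last_id[OF ne(1)] append_butlast_last_id[OF ne(2)] e by auto
  then have "col a zs t False L R = col a (butlast zs @ [last zs]) t False (butlast L @ [False]) (butlast R @ [True])"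
    using assms by (metis (full_types))
  also have "\<dots> = 0" using assms by (subst col_botF) auto
  finally show ?thesis .
qed

lemma Z0:
  assumes "1 \<le> m" "\<forall>zs\<in>set zss. length zs = 2*m+1"
    and "length h = 2*m+1" "\<not> hd h" "\<not> last h"
  shows "cols a zss (wl a m x y) h = 0"
  using assms(2-5)
proof (induction zss arbitrary: h)
  case Nil
  have "wl a m x y h = 0" unfolding wl_def
  proof (rule col_zero_last)
    show "length (drop (Suc m) h) = length (zL m x y)" "length (RR m h) = length (zL m x y)"
      using Nil by auto
    show "zL m x y \<noteq> []" using assms(1) by (simp add: zL_def)
    show "\<not> last (drop (Suc m) h)" using Nil assms(1) by (simp add: last_drop)
    have "RR m h ! (m - 1) = (\<not> h ! 0)" using Nil assms(1) by (simp add: nth_RR)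
    moreover have "h \<noteq> []" using Nil by auto
    then have "h ! 0 = hd h" by (simp add: hd_conv_nth)
    moreover have lR: "length (RR m h) = m" using Nil by simp
    moreover have "RR m h \<noteq> []" using lR assms(1) by (metis One_nat_def list.size(3) not_one_le_zero)
    ultimately show "last (RR m h)" using Nil by (metis last_conv_nth)
  qed
  then show ?case by simp
next
  case (Cons zs zss)
  have "col a zs True False h h' * cols a zss (wl a m x y) h' = 0" if "h' \<in> blists (length h)" for h'
  proof (cases "hd h'")
    case True
    have "h = False # tl h" using Cons.prems by (cases h) auto
    moreover have "h' \<noteq> []" using that Cons.prems by (auto simp: blists_def)
    ultimately have "col a zs True False h h' = 0"
      using col_zero_hd[of h' a zs False "tl h"] True by simp
    then show ?thesis by simp
  next
    case False
    show ?thesis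
    proof (cases "last h'")
      case True
      have "col a zs True False h h' = 0"
        using Cons.prems that True by (intro col_zero_last) (auto simp: blists_def)
      then show ?thesis by simp
    next
      case False
      then show ?thesis using Cons.IH[of h'] Cons.prems that \<open>\<not> hd h'\<close> by (auto simp: blists_def)
    qed
  qed
  then show ?case by (simp del: mult_eq_0_iff)
qed

lemma chain:
  assumes "d \<le> n" "length mid = 2*n+1"
  shows "cols a (map (zcol (Suc n) x y) [Suc (Suc n) - d..<Suc (Suc n)]) (wl a (Suc n) x y) (False # mid @ [True])
   = sig (a * inverse (x 1 * inverse (y (Suc (Suc n))))) * (\<Prod>i\<in>{Suc (Suc n) - d..Suc n}. (sig (a * inverse (x 1 * inverse (y i))))^2)
     * cols a (map (zcol n (\<lambda>i. x (i+1)) (\<lambda>i. y (i+1))) [Suc n - d..<Suc n]) (wl a n (\<lambda>i. x (i+1)) (\<lambda>i. y (i+1))) mid"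
  using assms
proof (induction d arbitrary: mid)
  case 0
  then show ?case by (simp add: wl_split)
next
  case (Suc d)
  define x' where "x' = (\<lambda>i. x (i+1))"
  define y' where "y' = (\<lambda>i. y (i+1))"
  define j where "j = Suc n - d"
  have j: "2 \<le> j" "j \<le> Suc n" "Suc (Suc n) - Suc d = j" "Suc n - Suc d = j - 1" "Suc (Suc n) - d = Suc j" "Suc n - d = j"
    using Suc.prems by (auto simp: j_def)
  define z0 where "z0 = x 1 * inverse (y j)"
  define zm where "zm = zcol n x' y' (j-1)"
  define rest where "rest = map (zcol (Suc n) x y) [Suc j..<Suc (Suc n)]"
  define srest where "srest = map (zcol n x' y') [j..<Suc n]"
  define C where "C = sig (a * inverse (x 1 * inverse (y (Suc (Suc n)))))"
  define P where "P = (\<Prod>i\<in>{Suc j..Suc n}. (sig (a * inverse (x 1 * inverse (y i))))^2)"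
  have zs: "zcol (Suc n) x y j = z0 # zm @ [z0]"
    unfolding z0_def zm_def x'_def y'_def using j by (intro zcol_split) simp
  have zml: "length zm = 2*n+1" by (simp add: zm_def)
  have IH: "cols a rest (wl a (Suc n) x y) (False # h @ [True]) = C * P * cols a srest (wl a n x' y') h"
    if "length h = 2*n+1" for h
    using Suc.IH[of h] Suc.prems that j unfolding rest_def srest_def C_def P_def x'_def y'_def by simp
  have Zr: "cols a rest (wl a (Suc n) x y) (False # h @ [False]) = 0" if "length h = 2*n+1" for h
    by (rule Z0) (use that in \<open>auto simp: rest_def\<close>)
  have e1: "[Suc (Suc n) - Suc d..<Suc (Suc n)] = j # [Suc j..<Suc (Suc n)]" using j by (simp add: upt_conv_Cons)
  have e2: "[Suc n - Suc d..<Suc n] = (j - 1) # [j..<Suc n]" using j by (simp add: upt_conv_Cons)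
  have "cols a (map (zcol (Suc n) x y) [Suc (Suc n) - Suc d..<Suc (Suc n)]) (wl a (Suc n) x y) (False # mid @ [True])
      = (\<Sum>h'\<in>blists (Suc (Suc (2*n+1))). col a (z0 # zm @ [z0]) True False (False # mid @ [True]) h' * cols a rest (wl a (Suc n) x y) h')"
    unfolding e1 using Suc.prems by (simp add: zs rest_def)
  also have "\<dots> = (\<Sum>c\<in>UNIV. \<Sum>dd\<in>UNIV. \<Sum>h\<in>blists (2*n+1). col a (z0 # zm @ [z0]) True False (False # mid @ [True]) (c # h @ [dd]) * cols a rest (wl a (Suc n) x y) (c # h @ [dd]))"
    unfolding sum_blists_Suc[where n="Suc (2*n+1)"] sum_blists_snoc[where k="2*n+1"] by simp
  also have "\<dots> = (\<Sum>h\<in>blists (2*n+1). (sig (a * inverse z0))^2 * col a zm True False mid h * cols a rest (wl a (Suc n) x y) (False # h @ [True]))"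
  proof -
    have "col a (z0 # zm @ [z0]) True False (False # mid @ [True]) (c # h @ [dd]) * cols a rest (wl a (Suc n) x y) (c # h @ [dd])
        = (if c = False \<and> dd = True then (sig (a * inverse z0))^2 * col a zm True False mid h * cols a rest (wl a (Suc n) x y) (False # h @ [True]) else 0)"
      if "h \<in> blists (2*n+1)" for c dd h
    proof -
      have lh: "length h = 2*n+1" using that by (simp add: blists_def)
      show ?thesis
        using lh Suc.prems zml Zr[OF lh]
        by (cases c; cases dd) (simp_all add: col_botT power2_eq_square sum_bool vweight_def)
    qed
    then show ?thesis by (simp add: sum_bool cong: sum.cong)
  qed
  also have "\<dots> = (\<Sum>h\<in>blists (2*n+1). (sig (a * inverse z0))^2 * col a zm True False mid h * (C * P * cols a srest (wl a n x' y') h))"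
    by (intro sum.cong refl) (simp add: IH blists_def)
  also have "\<dots> = (sig (a * inverse z0))^2 * C * P * (\<Sum>h\<in>blists (2*n+1). col a zm True False mid h * cols a srest (wl a n x' y') h)"
    by (simp add: sum_distrib_left mult_ac)
  also have "\<dots> = C * (\<Prod>i\<in>{Suc (Suc n) - Suc d..Suc n}. (sig (a * inverse (x 1 * inverse (y i))))^2)
     * cols a (map (zcol n x' y') [Suc n - Suc d..<Suc n]) (wl a n x' y') mid"
  proof -
    have "{Suc (Suc n) - Suc d..Suc n} = insert j {Suc j..Suc n}" using j by auto
    then have "(\<Prod>i\<in>{Suc (Suc n) - Suc d..Suc n}. (sig (a * inverse (x 1 * inverse (y i))))^2) = (sig (a * inverse z0))^2 * P"
      by (simp add: P_def z0_def)
    then show ?thesis unfolding e2 using Suc.prems by (simp add: zm_def srest_def mult_ac)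
  qed
  finally show ?case by (simp add: C_def x'_def y'_def)
qed

lemma prodB:
  fixes g :: "nat \<Rightarrow> complex"
  shows "(\<Prod>r\<in>{1..<2*n+2}. g (min r (2*n+2-r) + 1)) = g (n+2) * (\<Prod>i\<in>{2..n+1}. (g i)^2)"
proof -
  have s: "{1..<2*n+2} = {1..n} \<union> insert (n+1) {n+2..2*n+1}" by auto
  have "(\<Prod>r\<in>{1..<2*n+2}. g (min r (2*n+2-r) + 1))
      = (\<Prod>r\<in>{1..n}. g (min r (2*n+2-r) + 1)) * (g (n+2) * (\<Prod>r\<in>{n+2..2*n+1}. g (min r (2*n+2-r) + 1)))"
    unfolding s by (subst prod.union_disjoint) auto
  also have "(\<Prod>r\<in>{1..n}. g (min r (2*n+2-r) + 1)) = (\<Prod>i\<in>{2..n+1}. g i)"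
  proof -
    have "(\<Prod>r\<in>{1..n}. g (min r (2*n+2-r) + 1)) = (\<Prod>r\<in>{1..n}. g (r + 1))"
      by (intro prod.cong refl) auto
    also have "\<dots> = (\<Prod>i\<in>{2..n+1}. g i)"
      by (rule prod.reindex_bij_witness[of _ "\<lambda>i. i - 1" "\<lambda>r. r + 1"]) auto
    finally show ?thesis .
  qed
  also have "(\<Prod>r\<in>{n+2..2*n+1}. g (min r (2*n+2-r) + 1)) = (\<Prod>i\<in>{2..n+1}. g i)"
  proof -
    have "(\<Prod>r\<in>{n+2..2*n+1}. g (min r (2*n+2-r) + 1)) = (\<Prod>r\<in>{n+2..2*n+1}. g (2*n+3-r))"
      by (intro prod.cong refl) (auto simp: numeral_3_eq_3 Suc_diff_le)
    also have "\<dots> = (\<Prod>i\<in>{2..n+1}. g i)"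
      by (rule prod.reindex_bij_witness[of _ "\<lambda>i. 2*n+3-i" "\<lambda>r. 2*n+3-r"]) auto
    finally show ?thesis .
  qed
  finally show ?thesis by (simp add: power2_eq_square prod.distrib mult_ac)
qed

lemma Zc_special:
  assumes a: "a \<noteq> 0" and x: "\<forall>i\<in>{1..m+1}. x i \<noteq> 0" and m: "m = Suc n" and y1: "y 1 = a * x 1"
  shows "Zc m a x y =
      (sig (a^2))^2 * sig (a * inverse (x 1) * y (m+1)) * sig (a * inverse (x (m+1)) * y 1)
      * (\<Prod>i=2..m. (sig (a * inverse (x 1) * y i))^2 * (sig (a * inverse (x i) * y 1))^2)
      * Zc (m-1) a (\<lambda>i. x (i+1)) (\<lambda>i. y (i+1))"
proof -
  define x' where "x' = (\<lambda>i. x (i+1))"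
  define y' where "y' = (\<lambda>i. y (i+1))"
  define A where "A i = sig (a * inverse (x 1) * y i)" for i
  define B where "B i = sig (a * inverse (x i) * y 1)" for i
  have x1: "x 1 \<noteq> 0" using x by auto
  have z1: "x 1 * inverse (y 1) = inverse a" using y1 x1 a by (simp add: field_simps)
  define zm0 where "zm0 = zcol n x' y' 0"
  have zc1: "zcol (Suc n) x y 1 = inverse a # (zm0 @ [inverse a])"
    using zcol_split[of 1 n x y] z1 by (simp add: zm0_def x'_def y'_def)
  define hs where "hs = False # replicate (2*n+2) True"
  define K1 where "K1 = sig (a^2) * ((\<Prod>z\<leftarrow>zm0. sig (a * inverse z)) * sig (a^2))"
  have c1: "col a (zcol (Suc n) x y 1) True False (replicate (2 * Suc n + 1) True) h = (if h = hs then K1 else 0)"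
    if "h \<in> blists (2 * Suc n + 1)" for h
  proof -
    have hl: "length h = 2*n+3" using that by (simp add: blists_def)
    then obtain r R where h0: "h = r # R" by (cases h) auto
    then have h: "h = r # R" "length R = 2*n+2" using hl by auto
    have "replicate (2 * Suc n + 1) True = True # replicate (length (zm0 @ [inverse a])) True"
      by (simp add: zm0_def)
    moreover have "sig (a * inverse (inverse a)) = sig (a^2)" by (simp add: power2_eq_square)
    moreover have lenR: "length R = length (zm0 @ [inverse a])" using h(2) by (simp add: zm0_def)
    ultimately show ?thesis unfolding zc1 h using col_first[OF a lenR, of r]
      by (auto simp: hs_def K1_def)
  qed
  have hs_in: "hs \<in> blists (2 * Suc n + 1)" by (simp add: hs_def blists_def)
  have "Zc m a x y = (\<Sum>h\<in>blists (2 * Suc n + 1). col a (zcol (Suc n) x y 1) True False (replicate (2 * Suc n + 1) True) h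
        * cols a (map (zcol (Suc n) x y) [2..<Suc (Suc n)]) (wl a (Suc n) x y) h)"
    unfolding Zc_def m by (simp add: upt_conv_Cons numeral_2_eq_2)
  also have "\<dots> = (\<Sum>h\<in>blists (2 * Suc n + 1). (if h = hs then K1 else 0)
        * cols a (map (zcol (Suc n) x y) [2..<Suc (Suc n)]) (wl a (Suc n) x y) h)"
    by (rule sum.cong[OF refl], rule arg_cong2[where f="(*)"], erule c1, rule refl)
  also have "\<dots> = K1 * cols a (map (zcol (Suc n) x y) [2..<Suc (Suc n)]) (wl a (Suc n) x y) hs"
  proof -
    have "(\<Sum>h\<in>blists (2 * Suc n + 1). (if h = hs then K1 else 0)
        * cols a (map (zcol (Suc n) x y) [2..<Suc (Suc n)]) (wl a (Suc n) x y) h)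
      = (\<Sum>h\<in>blists (2 * Suc n + 1). if h = hs then K1 * cols a (map (zcol (Suc n) x y) [2..<Suc (Suc n)]) (wl a (Suc n) x y) h else 0)"
      by (intro sum.cong refl) simp
    also have "\<dots> = K1 * cols a (map (zcol (Suc n) x y) [2..<Suc (Suc n)]) (wl a (Suc n) x y) hs"
      using hs_in by (subst sum.delta) simp_all
    finally show ?thesis .
  qed
  also have "hs = False # replicate (2*n+1) True @ [True]"
    by (simp add: hs_def replicate_append_same[symmetric])
  also have "cols a (map (zcol (Suc n) x y) [2..<Suc (Suc n)]) (wl a (Suc n) x y) (False # replicate (2*n+1) True @ [True])
      = A (Suc (Suc n)) * (\<Prod>i\<in>{2..Suc n}. (A i)^2) * Zc n a x' y'"
    using chain[of n n "replicate (2*n+1) True" a x y]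
    by (simp add: A_def Zc_def x'_def y'_def inverse_mult_distrib mult.assoc)
  finally have main: "Zc m a x y = K1 * (A (Suc (Suc n)) * (\<Prod>i\<in>{2..Suc n}. (A i)^2) * Zc n a x' y')" .
  have pB: "(\<Prod>z\<leftarrow>zm0. sig (a * inverse z)) = B (Suc (Suc n)) * (\<Prod>i\<in>{2..Suc n}. (B i)^2)"
  proof -
    have "(\<Prod>z\<leftarrow>zm0. sig (a * inverse z)) = (\<Prod>r\<leftarrow>[1..<2*n+2]. B (min r (2*n+2-r) + 1))"
      by (simp add: zm0_def zcol_def spec_def x'_def y'_def B_def o_def inverse_mult_distrib mult.assoc)
    also have "\<dots> = (\<Prod>r\<in>{1..<2*n+2}. B (min r (2*n+2-r) + 1))"
      by (subst prod.distinct_set_conv_list[symmetric]) simp_all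
    also have "\<dots> = B (n+2) * (\<Prod>i\<in>{2..n+1}. (B i)^2)" by (rule prodB)
    finally show ?thesis by simp
  qed
  show ?thesis using main
    unfolding K1_def pB A_def[symmetric] B_def[symmetric] x'_def[symmetric] y'_def[symmetric]
    by (simp add: m prod.distrib power2_eq_square mult_ac)
qed

theorem lemma13:
  fixes m :: nat and a :: complex and x y :: "nat \<Rightarrow> complex"
  assumes "m \<ge> 1" and "a \<noteq> 0"
    and "\<forall>i\<in>{1..m+1}. x i \<noteq> 0" and "\<forall>i\<in>{1..m+1}. y i \<noteq> 0"
  shows "(\<forall>\<pi>. \<pi> permutes {1..m} \<longrightarrow> Z_HT m a (x \<circ> \<pi>) y = Z_HT m a x y)
       \<and> (\<forall>\<pi>. \<pi> permutes {1..m} \<longrightarrow> Z_HT m a x (y \<circ> \<pi>) = Z_HT m a x y)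
       \<and> (y 1 = a * x 1 \<longrightarrow>
            Z_HT m a x y =
              (sig (a^2))^2 * sig (a * inverse (x 1) * y (m+1)) * sig (a * inverse (x (m+1)) * y 1)
              * (\<Prod>i=2..m. (sig (a * inverse (x 1) * y i))^2 * (sig (a * inverse (x i) * y 1))^2)
              * Z_HT (m-1) a (\<lambda>i. x (i+1)) (\<lambda>i. y (i+1)))"
proof (intro conjI allI impI)
  fix \<pi> assume p: "\<pi> permutes {1..m}"
  have "Zc m a (x \<circ> \<pi>) y = Zc m a x y"
  proof (rule perm_from_adj[where F = "\<lambda>x. Zc m a x y", OF _ assms(3) p])
    fix x' :: "nat \<Rightarrow> complex" and i :: nat
    assume x': "\<forall>i\<in>{1..m+1}. x' i \<noteq> 0" and i: "1 \<le> i" "Suc i \<le> m"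
    have "Zc m a (x' \<circ> Transposition.transpose (Suc (i-1)) (Suc (Suc (i-1)))) y = Zc m a x' y"
      using i by (intro Zc_swapx[OF assms(2) _ x' assms(4)]) simp
    then show "Zc m a (x' \<circ> Transposition.transpose i (Suc i)) y = Zc m a x' y"
      using i by simp
  qed
  then show "Z_HT m a (x \<circ> \<pi>) y = Z_HT m a x y" by (simp add: ZHT_Zc_all)
next
  fix \<pi> assume p: "\<pi> permutes {1..m}"
  have "Zc m a x (y \<circ> \<pi>) = Zc m a x y"
  proof (rule perm_from_adj[where F = "\<lambda>y. Zc m a x y", OF _ assms(4) p])
    fix y' :: "nat \<Rightarrow> complex" and i :: nat
    assume y': "\<forall>i\<in>{1..m+1}. y' i \<noteq> 0" and i: "1 \<le> i" "Suc i \<le> m"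
    show "Zc m a x (y' \<circ> Transposition.transpose i (Suc i)) = Zc m a x y'"
      by (rule Zc_swapy[OF assms(2) i assms(3) y'])
  qed
  then show "Z_HT m a x (y \<circ> \<pi>) = Z_HT m a x y" by (simp add: ZHT_Zc_all)
next
  assume y1: "y 1 = a * x 1"
  obtain n where m: "m = Suc n" using assms(1) by (cases m) auto
  show "Z_HT m a x y =
              (sig (a^2))^2 * sig (a * inverse (x 1) * y (m+1)) * sig (a * inverse (x (m+1)) * y 1)
              * (\<Prod>i=2..m. (sig (a * inverse (x 1) * y i))^2 * (sig (a * inverse (x i) * y 1))^2)
              * Z_HT (m-1) a (\<lambda>i. x (i+1)) (\<lambda>i. y (i+1))"
    unfolding ZHT_Zc_all by (rule Zc_special[where m=m and n=n and a=a and x=x and y=y, OF assms(2) assms(3) m y1])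
qed

end
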